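(* Let $k\ge l\ge0$ be integers. Let $\alpha_1,\alpha_2\in\{0,\dots,l\}$ and $\beta_n\in\{0,\dots,l-\alpha_n\}$ for $n=1,2$, with $(\alpha_1,\beta_1)\neq(\alpha_2,\beta_2)$. Then $$[C^{\alpha_1}S_u^{\beta_1}H,\;C^{\alpha_2}S_u^{\beta_2}G]_F=0$$ for all $H\in\mathcal{H}_{k-\alpha_1+\beta_1,\,l-\alpha_1-\beta_1}(\mathbb{R}^{2m},\mathbb{C})$ and $G\in\mathcal{H}_{k-\alpha_2+\beta_2,\,l-\alpha_2-\beta_2}(\mathbb{R}^{2m},\mathbb{C})$.
   Context: Fix an integer $m>4$. For $x,u\in\mathbb{R}^m$ let $\mathcal{P}_{p,q}(\mathbb{R}^{2m},\mathbb{C})$ be complex polynomials of degree $p$ in $x$ and $q$ in $u$. The Fischer inner product is $[P,Q]_F=\overline{P}(\partial_x,\partial_u)Q(x,u)\big|_{x=u=0}$ ($\overline{P}(\partial_x,\partial_u)$: conjugate coefficients of $P$ and replace $x_j,u_j$ by $\partial_{x_j},\partial_{u_j}$). Write $|x|^2=\sum x_j^2$, $\langle u,x\rangle=\sum u_jx_j$, $\Delta_x=\sum\partial_{x_j}^2$, $\Delta_u=\sum\partial_{u_j}^2$, $\langle\partial_u,\partial_x\rangle=\sum\partial_{u_j}\partial_{x_j}$, $\langle x,\partial_u\rangle=\sum x_j\partial_{u_j}$, $\langle u,\partial_x\rangle=\sum u_j\partial_{x_j}$, $\ker(D_1,\dots,D_r)=\bigcap\ker D_i$. Every $P\in\mathcal{P}_{p,q}$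 is uniquely $\sum_{a,b\ge0}|x|^{2a}|u|^{2b}H'_{p-2a,q-2b}$ with $H'_{p-2a,q-2b}\in\mathcal{P}_{p-2a,q-2b}\cap\ker(\Delta_x,\Delta_u)$; $\pi_{\mathfrak{s}}P:=H'_{p,q}$. On $\ker(\Delta_x,\Delta_u)$: $S_u=\pi_{\mathfrak{s}}\langle u,\partial_x\rangle$, $C=\pi_{\mathfrak{s}}\langle u,x\rangle$. For $a\ge b\ge0$, $\mathcal{H}_{a,b}=\mathcal{P}_{a,b}\cap\ker(\Delta_x,\Delta_u,\langle\partial_u,\partial_x\rangle,\langle x,\partial_u\rangle)$. *)

theory Defs
  imports Complex_Main "HOL-Library.Poly_Mapping"
begin

(* Complex polynomials in the 2m real variables x_1..x_m, u_1..u_m.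
   Variables are indexed by nat: x_{j+1} is variable j (j < m), u_{j+1} is variable m + j. *)
type_synonym cpoly = "(nat \<Rightarrow>\<^sub>0 nat) \<Rightarrow>\<^sub>0 complex"

definition pvar :: "nat \<Rightarrow> cpoly" where
  "pvar i = Poly_Mapping.single (Poly_Mapping.single i 1) 1"

definition pderiv_var :: "nat \<Rightarrow> cpoly \<Rightarrow> cpoly" where
  "pderiv_var i P = (\<Sum>(a::nat \<Rightarrow>\<^sub>0 nat)\<in>Poly_Mapping.keys P.
      Poly_Mapping.single (a - Poly_Mapping.single i 1) (of_nat (Poly_Mapping.lookup a i) * Poly_Mapping.lookup P a :: complex))"

definition pderiv_mono :: "(nat \<Rightarrow>\<^sub>0 nat) \<Rightarrow> cpoly \<Rightarrow> cpoly" where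
  "pderiv_mono a Q = foldr (\<lambda>i R. (pderiv_var i ^^ Poly_Mapping.lookup a i) R) (sorted_list_of_set (Poly_Mapping.keys a)) Q"

definition fischer :: "cpoly \<Rightarrow> cpoly \<Rightarrow> complex" where
  "fischer P Q = (\<Sum>a\<in>Poly_Mapping.keys P. cnj (Poly_Mapping.lookup P a) * Poly_Mapping.lookup (pderiv_mono a Q) 0)"

definition Pspace :: "nat \<Rightarrow> nat \<Rightarrow> nat \<Rightarrow> cpoly set" where
  "Pspace m p q = {P. \<forall>a\<in>Poly_Mapping.keys P. Poly_Mapping.keys a \<subseteq> {..<2*m}
      \<and> (\<Sum>j<m. Poly_Mapping.lookup a j) = p \<and> (\<Sum>j<m. Poly_Mapping.lookup a (m + j)) = q}"

definition lap_x :: "nat \<Rightarrow> cpoly \<Rightarrow> cpoly" where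
  "lap_x m P = (\<Sum>j<m. pderiv_var j (pderiv_var j P))"

definition lap_u :: "nat \<Rightarrow> cpoly \<Rightarrow> cpoly" where
  "lap_u m P = (\<Sum>j<m. pderiv_var (m + j) (pderiv_var (m + j) P))"

definition du_dx :: "nat \<Rightarrow> cpoly \<Rightarrow> cpoly" where
  "du_dx m P = (\<Sum>j<m. pderiv_var (m + j) (pderiv_var j P))"

definition x_du :: "nat \<Rightarrow> cpoly \<Rightarrow> cpoly" where
  "x_du m P = (\<Sum>j<m. pvar j * pderiv_var (m + j) P)"

definition u_dx :: "nat \<Rightarrow> cpoly \<Rightarrow> cpoly" where
  "u_dx m P = (\<Sum>j<m. pvar (m + j) * pderiv_var j P)"

definition normsq_x :: "nat \<Rightarrow> cpoly" where
  "normsq_x m = (\<Sum>j<m. pvar j ^ 2)"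

definition normsq_u :: "nat \<Rightarrow> cpoly" where
  "normsq_u m = (\<Sum>j<m. pvar (m + j) ^ 2)"

definition ux :: "nat \<Rightarrow> cpoly" where
  "ux m = (\<Sum>j<m. pvar (m + j) * pvar j)"

definition Harm :: "nat \<Rightarrow> nat \<Rightarrow> nat \<Rightarrow> cpoly set" where
  "Harm m p q = {P \<in> Pspace m p q. lap_x m P = 0 \<and> lap_u m P = 0}"

definition pi_s :: "nat \<Rightarrow> cpoly \<Rightarrow> cpoly" where
  "pi_s m P = (THE h. \<exists>p q H. P \<in> Pspace m p q
      \<and> (\<forall>a b. H a b \<in> Harm m (p - 2*a) (q - 2*b))
      \<and> P = (\<Sum>a\<le>p div 2. \<Sum>b\<le>q div 2. normsq_x m ^ a * normsq_u m ^ b * H a b)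
      \<and> h = H 0 0)"

definition S_u :: "nat \<Rightarrow> cpoly \<Rightarrow> cpoly" where
  "S_u m P = pi_s m (u_dx m P)"

definition C_op :: "nat \<Rightarrow> cpoly \<Rightarrow> cpoly" where
  "C_op m P = pi_s m (ux m * P)"

definition Hspace :: "nat \<Rightarrow> nat \<Rightarrow> nat \<Rightarrow> cpoly set" where
  "Hspace m a b = {P \<in> Pspace m a b. lap_x m P = 0 \<and> lap_u m P = 0
      \<and> du_dx m P = 0 \<and> x_du m P = 0}"

end

theory Submission
  imports Defs
begin


abbreviation ev :: "nat \<Rightarrow> (nat \<Rightarrow>\<^sub>0 nat)" where "ev i \<equiv> Poly_Mapping.single i (Suc 0)"
abbreviation lk :: "('a \<Rightarrow>\<^sub>0 'b::zero) \<Rightarrow> 'a \<Rightarrow> 'b" where "lk \<equiv> Poly_Mapping.lookup"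
definition cst :: "complex \<Rightarrow> cpoly" where "cst c = Poly_Mapping.single 0 c"

lemma lookup_minus_nat: "lk (a - b) k = lk a k - lk (b :: nat \<Rightarrow>\<^sub>0 nat) k"
  by (simp add: minus_poly_mapping.rep_eq)

lemma lookup_add_nat: "lk (a + b) k = lk a k + lk (b :: nat \<Rightarrow>\<^sub>0 nat) k"
  by (simp add: lookup_add)

lemma pm_expand: "P = (\<Sum>a\<in>Poly_Mapping.keys P. Poly_Mapping.single a (lk P a))"
proof (rule poly_mapping_eqI)
  fix k
  show "lk P k = lk (\<Sum>a\<in>Poly_Mapping.keys P. Poly_Mapping.single a (lk P a)) k"
    by (simp add: lookup_sum lookup_single when_def in_keys_iff)
qed

lemma ev_cancel: "lk a i \<ge> 1 \<Longrightarrow> a - ev i + ev i = a"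
  by (rule poly_mapping_eqI) (auto simp: lookup_add lookup_minus_nat lookup_single when_def)

lemma lookup_dv: "lk (pderiv_var i P) c = of_nat (lk c i + 1) * lk P (c + ev i)"
proof -
  have "lk (pderiv_var i P) c = (\<Sum>a\<in>Poly_Mapping.keys P.
     (of_nat (lk a i) * lk P a when a - ev i = c))"
    by (simp add: pderiv_var_def lookup_sum lookup_single)
  also have "\<dots> = (\<Sum>a\<in>Poly_Mapping.keys P. (if a = c + ev i then of_nat (lk c i + 1) * lk P (c + ev i) else 0))"
  proof (rule sum.cong)
    fix a assume "a \<in> Poly_Mapping.keys P"
    show "(of_nat (lk a i) * lk P a when a - ev i = c) = (if a = c + ev i then of_nat (lk c i + 1) * lk P (c + ev i) else 0)"
    proof (cases "lk a i = 0")
      case True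
      then have "a \<noteq> c + ev i" by (auto simp: lookup_add)
      then show ?thesis using True by (simp add: when_def)
    next
      case False
      then have "a - ev i = c \<longleftrightarrow> a = c + ev i" using ev_cancel[where i=i and a=a]
        by (metis add_diff_cancel_right' less_one not_le)
      then show ?thesis by (auto simp: when_def lookup_add)
    qed
  qed simp
  also have "\<dots> = of_nat (lk c i + 1) * lk P (c + ev i)"
    by (simp add: in_keys_iff)
  finally show ?thesis .
qed

lemma dv_add: "pderiv_var i (P + Q) = pderiv_var i P + pderiv_var i Q"
  by (rule poly_mapping_eqI) (simp add: lookup_dv lookup_add algebra_simps)
lemma dv_zero[simp]: "pderiv_var i 0 = 0"
  by (rule poly_mapping_eqI) (simp add: lookup_dv)
lemma dv_minus: "pderiv_var i (P - Q) = pderiv_var i P - pderiv_var i Q"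
  by (rule poly_mapping_eqI) (simp add: lookup_dv lookup_minus algebra_simps)
lemma dv_uminus: "pderiv_var i (- Q) = - pderiv_var i Q"
  by (rule poly_mapping_eqI) (simp add: lookup_dv)
lemma dv_sum: "pderiv_var i (sum f S) = (\<Sum>x\<in>S. pderiv_var i (f x))"
  by (induction S rule: infinite_finite_induct) (simp_all add: dv_add)

lemma dv_single: "pderiv_var i (Poly_Mapping.single a c) = Poly_Mapping.single (a - ev i) (of_nat (lk a i) * c)"
  by (cases "c = 0") (simp_all add: pderiv_var_def)

lemma dv_mono_leibniz:
  "pderiv_var i (Poly_Mapping.single a c * Poly_Mapping.single b d) =
    pderiv_var i (Poly_Mapping.single a c) * Poly_Mapping.single b d + Poly_Mapping.single a c * pderiv_var i (Poly_Mapping.single b d)"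
proof -
  have l: "lk (a+b) i = lk a i + lk b i" by (simp add: lookup_add)
  consider "lk a i = 0" "lk b i = 0" | "lk a i \<ge> 1" "lk b i = 0"
     | "lk a i = 0" "lk b i \<ge> 1" | "lk a i \<ge> 1" "lk b i \<ge> 1" by linarith
  then show ?thesis
  proof cases
    case 1 then show ?thesis by (simp add: mult_single dv_single l ac_simps)
  next
    case 2
    have "a + b - ev i = a - ev i + b"
      by (rule poly_mapping_eqI) (use 2 in \<open>auto simp: lookup_add lookup_minus_nat lookup_single when_def\<close>)
    then show ?thesis using 2 by (simp add: mult_single dv_single l ac_simps)
  next
    case 3
    have "a + b - ev i = a + (b - ev i)"
      by (rule poly_mapping_eqI) (use 3 in \<open>auto simp: lookup_add lookup_minus_nat lookup_single when_def\<close>)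
    then show ?thesis using 3 by (simp add: mult_single dv_single l ac_simps)
  next
    case 4
    have e1: "a - ev i + b = a + b - ev i"
      by (rule poly_mapping_eqI) (use 4 in \<open>auto simp: lookup_add lookup_minus_nat lookup_single when_def\<close>)
    have e2: "a + (b - ev i) = a + b - ev i"
      by (rule poly_mapping_eqI) (use 4 in \<open>auto simp: lookup_add lookup_minus_nat lookup_single when_def\<close>)
    show ?thesis unfolding dv_single mult_single e1 e2 l
      by (simp add: algebra_simps flip: single_add)
  qed
qed

lemma dv_mult_sums:
  "pderiv_var i ((\<Sum>a\<in>A. Poly_Mapping.single a (p a)) * (\<Sum>b\<in>B. Poly_Mapping.single b (q b))) =
   pderiv_var i (\<Sum>a\<in>A. Poly_Mapping.single a (p a)) * (\<Sum>b\<in>B. Poly_Mapping.single b (q b))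
   + (\<Sum>a\<in>A. Poly_Mapping.single a (p a)) * pderiv_var i (\<Sum>b\<in>B. Poly_Mapping.single b (q b))"
  by (simp add: sum_product dv_sum dv_mono_leibniz sum.distrib)

lemma dv_mult: "pderiv_var i (P * Q) = pderiv_var i P * Q + P * pderiv_var i Q"
  using dv_mult_sums[where i=i and A="Poly_Mapping.keys P" and p="lk P" and B="Poly_Mapping.keys Q" and q="lk Q"]
  by (simp only: pm_expand[symmetric])

lemma dv_comm: "pderiv_var i (pderiv_var j P) = pderiv_var j (pderiv_var i P)"
  by (rule poly_mapping_eqI) (auto simp: lookup_dv lookup_add lookup_single when_def ac_simps)

lemma dv_cst[simp]: "pderiv_var i (cst c) = 0"
  by (simp add: cst_def dv_single)
lemma dv_one[simp]: "pderiv_var i 1 = 0"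
  using dv_cst[of i 1] by (simp add: cst_def)
lemma dv_numeral[simp]: "pderiv_var i (numeral n) = 0"
  using dv_cst[of i "numeral n"] by (simp add: cst_def)
lemma dv_of_nat[simp]: "pderiv_var i (of_nat n) = 0"
  using dv_cst[of i "of_nat n"] by (simp add: cst_def)
lemma dv_pvar: "pderiv_var i (pvar j) = (if i = j then 1 else 0)"
  by (simp add: pvar_def dv_single lookup_single when_def)

lemma cst_mult: "cst a * cst b = cst (a * b)" by (simp add: cst_def mult_single)
lemma cst_add: "cst a + cst b = cst (a + b)" by (simp add: cst_def single_add)
lemma cst_diff: "cst a - cst b = cst (a - b)" by (simp add: cst_def single_diff)
lemma cst_0[simp]: "cst 0 = 0" by (simp add: cst_def)
lemma cst_1[simp]: "cst 1 = 1" by (simp add: cst_def)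
lemma cst_numeral: "cst (numeral n) = numeral n" by (simp add: cst_def)
lemma cst_of_nat: "cst (of_nat n) = of_nat n" by (simp add: cst_def)
lemma dv_cmul: "pderiv_var i (cst c * P) = cst c * pderiv_var i P"
  by (simp add: dv_mult)
lemma lookup_cmul: "lk (cst c * P) k = c * lk P k"
  by (simp add: cst_def mult_map_scale_conv_mult[symmetric] map.rep_eq when_def)


lemma lk_iter: "lk ((pderiv_var i ^^ n) P) c = pochhammer (of_nat (lk c i + 1)) n * lk P (c + Poly_Mapping.single i n)"
proof (induction n arbitrary: c)
  case 0 then show ?case by simp
next
  case (Suc n)
  have "lk ((pderiv_var i ^^ Suc n) P) c = of_nat (lk c i + 1) * lk ((pderiv_var i ^^ n) P) (c + ev i)"
    by (simp add: lookup_dv)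
  also have "\<dots> = of_nat (lk c i + 1) * (pochhammer (of_nat (lk c i + 1) + 1) n * lk P (c + ev i + Poly_Mapping.single i n))"
    by (simp add: Suc lookup_add)
  also have "c + ev i + Poly_Mapping.single i n = c + Poly_Mapping.single i (Suc n)"
    by (simp add: add.assoc flip: single_add)
  finally show ?case by (simp add: pochhammer_rec)
qed

lemma lk_foldr:
  assumes "distinct L"
  shows "lk (foldr (\<lambda>i R. (pderiv_var i ^^ f i) R) L Q) c =
     (\<Prod>i\<in>set L. pochhammer (of_nat (lk c i + 1)) (f i)) * lk Q (c + (\<Sum>i\<in>set L. Poly_Mapping.single i (f i)))"
  using assms
proof (induction L arbitrary: c)
  case Nil then show ?case by simp
next
  case (Cons i L)
  let ?c = "c + Poly_Mapping.single i (f i)"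
  let ?F = "\<lambda>i R. (pderiv_var i ^^ f i) R"
  have 2: "(\<Prod>j\<in>set L. pochhammer (of_nat (lk ?c j + 1)) (f j)) = (\<Prod>j\<in>set L. pochhammer (of_nat (lk c j + 1)) (f j))"
    by (rule prod.cong) (use Cons in \<open>auto simp: lookup_add lookup_single when_def\<close>)
  have "lk (foldr ?F (i # L) Q) c = pochhammer (of_nat (lk c i + 1)) (f i) * lk (foldr ?F L Q) ?c"
    by (simp add: lk_iter)
  also have "\<dots> = pochhammer (of_nat (lk c i + 1)) (f i) * ((\<Prod>j\<in>set L. pochhammer (of_nat (lk ?c j + 1)) (f j))
      * lk Q (?c + (\<Sum>j\<in>set L. Poly_Mapping.single j (f j))))"
    using Cons by simp
  also have "\<dots> = (\<Prod>j\<in>set (i # L). pochhammer (of_nat (lk c j + 1)) (f j)) * lk Q (c + (\<Sum>j\<in>set (i # L). Poly_Mapping.single j (f j)))"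
    using Cons by (simp only: 2) (simp add: add.assoc mult.assoc)
  finally show ?case .
qed

lemma sum_single_keys: "(\<Sum>i\<in>Poly_Mapping.keys a. Poly_Mapping.single i (lk a i)) = (a :: nat \<Rightarrow>\<^sub>0 nat)"
  by (rule poly_mapping_eqI) (simp add: lookup_sum lookup_single when_def in_keys_iff)

definition wt :: "(nat \<Rightarrow>\<^sub>0 nat) \<Rightarrow> nat" where
  "wt a = (\<Prod>i\<in>Poly_Mapping.keys a. fact (lk a i))"

lemma wt_pos: "wt a > 0" by (simp add: wt_def)

lemma wt_ext: assumes "finite T" "Poly_Mapping.keys a \<subseteq> T" shows "wt a = (\<Prod>i\<in>T. fact (lk a i))"
  unfolding wt_def by (rule prod.mono_neutral_left) (use assms in \<open>auto simp: in_keys_iff\<close>)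

lemma wt_add_ev: "wt (a + ev i) = (lk a i + 1) * wt a"
proof -
  let ?T = "insert i (Poly_Mapping.keys a)"
  have f: "finite ?T" by simp
  have "Poly_Mapping.keys (a + ev i) \<subseteq> ?T" using keys_add[of a "ev i"] by auto
  then have "wt (a + ev i) = (\<Prod>j\<in>?T. fact (lk (a + ev i) j))" by (rule wt_ext[OF f])
  also have "\<dots> = fact (lk a i + 1) * (\<Prod>j\<in>?T - {i}. fact (lk (a + ev i) j))"
    by (subst prod.remove[OF f, of i]) (auto simp: lookup_add)
  also have "(\<Prod>j\<in>?T - {i}. fact (lk (a + ev i) j)) = (\<Prod>j\<in>?T - {i}. fact (lk a j))"
    by (rule prod.cong) (auto simp: lookup_add lookup_single)
  also have "wt a = fact (lk a i) * (\<Prod>j\<in>?T - {i}. fact (lk a j))"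
    using wt_ext[OF f subset_insertI[of _ i]] prod.remove[OF f, of i "\<lambda>j. fact (lk a j)"] by simp
  ultimately show ?thesis by (simp add: algebra_simps)
qed

lemma lk_pderiv_mono0: "lk (pderiv_mono a Q) 0 = of_nat (wt a) * lk Q a"
proof -
  have d: "distinct (sorted_list_of_set (Poly_Mapping.keys a))" by simp
  show ?thesis
    unfolding pderiv_mono_def lk_foldr[OF d] using sum_single_keys[of a]
    by (simp add: wt_def pochhammer_fact[symmetric])
qed

lemma fischer_closed: "fischer P Q = (\<Sum>a\<in>Poly_Mapping.keys P. cnj (lk P a) * of_nat (wt a) * lk Q a)"
  unfolding fischer_def lk_pderiv_mono0 by (simp add: mult.assoc)

lemma fischer_ext: assumes "finite S" "Poly_Mapping.keys P \<subseteq> S"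
  shows "fischer P Q = (\<Sum>a\<in>S. cnj (lk P a) * of_nat (wt a) * lk Q a)"
  unfolding fischer_closed by (rule sum.mono_neutral_left) (use assms in \<open>auto simp: in_keys_iff\<close>)

lemma fischer_add_left: "fischer (P1 + P2) Q = fischer P1 Q + fischer P2 Q"
proof -
  let ?S = "Poly_Mapping.keys P1 \<union> Poly_Mapping.keys P2"
  have "fischer (P1 + P2) Q = (\<Sum>a\<in>?S. cnj (lk (P1+P2) a) * of_nat (wt a) * lk Q a)"
    by (rule fischer_ext) (use keys_add[of P1 P2] in auto)
  moreover have "fischer P1 Q = (\<Sum>a\<in>?S. cnj (lk P1 a) * of_nat (wt a) * lk Q a)" by (rule fischer_ext) auto
  moreover have "fischer P2 Q = (\<Sum>a\<in>?S. cnj (lk P2 a) * of_nat (wt a) * lk Q a)" by (rule fischer_ext) auto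
  ultimately show ?thesis by (simp add: lookup_add sum.distrib algebra_simps)
qed

lemma fischer_add_right: "fischer P (Q1 + Q2) = fischer P Q1 + fischer P Q2"
  by (simp add: fischer_closed lookup_add sum.distrib algebra_simps)

lemma fischer_zero_left[simp]: "fischer 0 Q = 0" by (simp add: fischer_closed)
lemma fischer_zero_right[simp]: "fischer P 0 = 0" by (simp add: fischer_closed)

lemma lookup_cmul2: "lk (P * cst c) k = c * lk P k"
  by (simp add: lookup_cmul mult.commute[of P])

lemma fischer_cmul_right: "fischer P (cst c * Q) = c * fischer P Q"
  by (simp add: fischer_closed lookup_cmul lookup_cmul2 sum_distrib_left algebra_simps)

lemma fischer_cmul_left: "fischer (cst c * P) Q = cnj c * fischer P Q"
proof -
  have "fischer (cst c * P) Q = (\<Sum>a\<in>Poly_Mapping.keys P. cnj (lk (cst c * P) a) * of_nat (wt a) * lk Q a)"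
    by (rule fischer_ext) (auto simp: in_keys_iff lookup_cmul)
  then show ?thesis by (simp add: fischer_closed lookup_cmul lookup_cmul2 sum_distrib_left algebra_simps)
qed

lemma fischer_uminus_left: "fischer (- P) Q = - fischer P Q"
  using fischer_add_left[of P "-P" Q] by (simp add: add_eq_0_iff)
lemma fischer_uminus_right: "fischer P (- Q) = - fischer P Q"
  using fischer_add_right[of P Q "-Q"] by (simp add: add_eq_0_iff)
lemma fischer_diff_left: "fischer (P1 - P2) Q = fischer P1 Q - fischer P2 Q"
  using fischer_add_left[of P1 "-P2" Q] by (simp add: fischer_uminus_left)
lemma fischer_diff_right: "fischer P (Q1 - Q2) = fischer P Q1 - fischer P Q2"
  using fischer_add_right[of P Q1 "-Q2"] by (simp add: fischer_uminus_right)
lemma fischer_sum_left: "fischer (sum f S) Q = (\<Sum>x\<in>S. fischer (f x) Q)"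
  by (induction S rule: infinite_finite_induct) (simp_all add: fischer_add_left)
lemma fischer_sum_right: "fischer P (sum f S) = (\<Sum>x\<in>S. fischer P (f x))"
  by (induction S rule: infinite_finite_induct) (simp_all add: fischer_add_right)

lemma fischer_conj: "fischer Q P = cnj (fischer P Q)"
proof -
  let ?S = "Poly_Mapping.keys P \<union> Poly_Mapping.keys Q"
  have "fischer Q P = (\<Sum>a\<in>?S. cnj (lk Q a) * of_nat (wt a) * lk P a)" by (rule fischer_ext) auto
  moreover have "fischer P Q = (\<Sum>a\<in>?S. cnj (lk P a) * of_nat (wt a) * lk Q a)" by (rule fischer_ext) auto
  ultimately show ?thesis by (simp add: ac_simps)
qed

lemma cnj_sq: "cnj z * of_nat n * z = of_real ((cmod z)\<^sup>2 * real n)"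
proof -
  have "cnj z * z = of_real ((cmod z)\<^sup>2)" by (metis complex_norm_square mult.commute)
  then show ?thesis by (metis mult.commute mult.left_commute of_real_mult of_real_of_nat_eq)
qed

lemma fischer_self_zero: assumes "fischer P P = 0" shows "P = 0"
proof -
  let ?S = "(\<Sum>a\<in>Poly_Mapping.keys P. (cmod (lk P a))\<^sup>2 * real (wt a))"
  have "fischer P P = (\<Sum>a\<in>Poly_Mapping.keys P. of_real ((cmod (lk P a))\<^sup>2 * real (wt a)))"
    unfolding fischer_closed
    by (rule sum.cong) (simp_all add: cnj_sq)
  then have h: "fischer P P = of_real ?S" by (simp only: of_real_sum)
  have "complex_of_real ?S = 0" using h assms by (simp only:)
  then have "?S = 0" by (simp only: of_real_eq_0_iff)
  then have "\<forall>a\<in>Poly_Mapping.keys P. (cmod (lk P a))\<^sup>2 * real (wt a) = 0"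
    by (subst (asm) sum_nonneg_eq_0_iff) auto
  then have "\<forall>a\<in>Poly_Mapping.keys P. lk P a = 0" using wt_pos
    by (metis mult_eq_0_iff norm_eq_zero of_nat_0_less_iff power_eq_0_iff less_irrefl)
  then show ?thesis by (metis in_keys_iff keys_eq_empty equals0I)
qed

lemma pvar_mult_expand: "pvar i * P = (\<Sum>a\<in>Poly_Mapping.keys P. Poly_Mapping.single (ev i + a) (lk P a))"
  apply (subst (1) pm_expand[of P])
  by (simp add: pvar_def sum_distrib_left mult_single)

lemma ev_add_eq: "(ev i + a = b) \<longleftrightarrow> (1 \<le> lk b i \<and> a = b - ev i)"
proof
  assume "ev i + a = b" then show "1 \<le> lk b i \<and> a = b - ev i"
    by (auto simp: lookup_add)
next
  assume "1 \<le> lk b i \<and> a = b - ev i" then show "ev i + a = b"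
    using ev_cancel[where a=b and i=i] by (simp add: add.commute)
qed

lemma lk_pvar_mult: "lk (pvar i * P) b = (if 1 \<le> lk b i then lk P (b - ev i) else 0)"
  unfolding pvar_mult_expand lookup_sum lookup_single
  by (auto simp: when_def ev_add_eq in_keys_iff)

lemma fischer_adj: "fischer (pvar i * P) Q = fischer P (pderiv_var i Q)"
proof -
  let ?T = "(\<lambda>a. a + ev i) ` Poly_Mapping.keys P"
  have sub: "Poly_Mapping.keys (pvar i * P) \<subseteq> ?T"
  proof
    fix b assume "b \<in> Poly_Mapping.keys (pvar i * P)"
    then have "1 \<le> lk b i" "b - ev i \<in> Poly_Mapping.keys P"
      by (auto simp: in_keys_iff lk_pvar_mult split: if_splits)
    then show "b \<in> ?T" using ev_cancel[where a=b and i=i] by (metis image_eqI)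
  qed
  have inj: "inj_on (\<lambda>a. a + ev i) (Poly_Mapping.keys P)" by (auto simp: inj_on_def)
  have lkx: "\<And>a. lk (pvar i * P) (a + ev i) = lk P a" by (simp add: lk_pvar_mult lookup_add)
  have "fischer (pvar i * P) Q = (\<Sum>b\<in>?T. cnj (lk (pvar i * P) b) * of_nat (wt b) * lk Q b)"
    by (rule fischer_ext[OF _ sub]) simp
  also have "\<dots> = (\<Sum>a\<in>Poly_Mapping.keys P. cnj (lk (pvar i * P) (a + ev i)) * of_nat (wt (a + ev i)) * lk Q (a + ev i))"
    by (subst sum.reindex[OF inj]) simp
  also have "\<dots> = (\<Sum>a\<in>Poly_Mapping.keys P. cnj (lk P a) * of_nat (wt a) * lk (pderiv_var i Q) a)"
    using lkx by (intro sum.cong) (simp_all add: lookup_add wt_add_ev lookup_dv algebra_simps)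
  also have "\<dots> = fischer P (pderiv_var i Q)" by (simp add: fischer_closed)
  finally show ?thesis .
qed

lemma fischer_adj2: "fischer (pderiv_var i P) Q = fischer P (pvar i * Q)"
  by (metis complex_cnj_cnj fischer_adj fischer_conj)


definition Eulx :: "nat \<Rightarrow> cpoly \<Rightarrow> cpoly" where "Eulx m P = (\<Sum>j<m. pvar j * pderiv_var j P)"
definition Eulu :: "nat \<Rightarrow> cpoly \<Rightarrow> cpoly" where "Eulu m P = (\<Sum>j<m. pvar (m+j) * pderiv_var (m+j) P)"

lemma delta_mult[simp]: "(\<Sum>x\<in>A. f x * (if j = x then 1 else (0::cpoly))) = (if j \<in> A \<and> finite A then f j else 0)"
proof -
  have "(\<Sum>x\<in>A. f x * (if j = x then 1 else (0::cpoly))) = (\<Sum>x\<in>A. if j = x then f x else 0)"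
    by (rule sum.cong) auto
  then show ?thesis by (cases "finite A") simp_all
qed

lemma delta_mult2[simp]: "(\<Sum>x\<in>A. (if j = x then 1 else (0::cpoly)) * f x) = (if j \<in> A \<and> finite A then f j else 0)"
  using delta_mult[of f j A] by (simp add: mult.commute)

lemma dvx_X2: "j < m \<Longrightarrow> pderiv_var j (normsq_x m) = 2 * pvar j"
  by (simp add: normsq_x_def dv_sum power2_eq_square dv_mult dv_pvar if_distrib cong: if_cong)
lemma dvu_X2: "j < m \<Longrightarrow> pderiv_var (m+j) (normsq_x m) = 0"
  by (simp add: normsq_x_def dv_sum power2_eq_square dv_mult dv_pvar)
lemma dvx_U2: "j < m \<Longrightarrow> pderiv_var j (normsq_u m) = 0"
  by (simp add: normsq_u_def dv_sum power2_eq_square dv_mult dv_pvar)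
lemma dvu_U2: "j < m \<Longrightarrow> pderiv_var (m+j) (normsq_u m) = 2 * pvar (m+j)"
  by (simp add: normsq_u_def dv_sum power2_eq_square dv_mult dv_pvar if_distrib cong: if_cong)
lemma dvx_Q: "j < m \<Longrightarrow> pderiv_var j (ux m) = pvar (m+j)"
  by (simp add: ux_def dv_sum dv_mult dv_pvar del: delta_mult) (simp add: if_distrib cong: if_cong)
lemma dvu_Q: "j < m \<Longrightarrow> pderiv_var (m+j) (ux m) = pvar j"
  by (simp add: ux_def dv_sum dv_mult dv_pvar)

lemma dv_xu: "j < m \<Longrightarrow> pderiv_var j (pvar (m+k)) = 0" by (simp add: dv_pvar)
lemma dv_ux: "k < m \<Longrightarrow> pderiv_var (m+j) (pvar k) = 0" by (simp add: dv_pvar)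
lemma dv_xx: "pderiv_var j (pvar k) = (if j = k then 1 else 0)" by (simp add: dv_pvar)
lemma dv_uu: "pderiv_var (m+j) (pvar (m+k)) = (if j = k then 1 else 0)" by (simp add: dv_pvar)

lemmas dvs = dv_add dv_minus dv_uminus dv_mult dv_sum dv_xu dv_ux dv_uu dvx_X2 dvu_X2 dvx_U2 dvu_U2 dvx_Q dvu_Q

lemma lin_sum_add: "(\<Sum>j\<in>S. f j (P + Q)) = (\<Sum>j\<in>S. f j P) + (\<Sum>j\<in>S. f j Q)" if "\<And>j P Q. f j (P + Q) = f j P + f j Q"
  using that by (simp add: sum.distrib)

lemma lapx_add: "lap_x m (P + Q) = lap_x m P + lap_x m Q" by (simp add: lap_x_def dv_add sum.distrib)
lemma lapu_add: "lap_u m (P + Q) = lap_u m P + lap_u m Q" by (simp add: lap_u_def dv_add sum.distrib)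
lemma D_add: "du_dx m (P + Q) = du_dx m P + du_dx m Q" by (simp add: du_dx_def dv_add sum.distrib)
lemma A_add: "u_dx m (P + Q) = u_dx m P + u_dx m Q" by (simp add: u_dx_def dv_add sum.distrib algebra_simps)
lemma B_add: "x_du m (P + Q) = x_du m P + x_du m Q" by (simp add: x_du_def dv_add sum.distrib algebra_simps)
lemma Ex_add: "Eulx m (P + Q) = Eulx m P + Eulx m Q" by (simp add: Eulx_def dv_add sum.distrib algebra_simps)
lemma Eu_add: "Eulu m (P + Q) = Eulu m P + Eulu m Q" by (simp add: Eulu_def dv_add sum.distrib algebra_simps)

lemma lapx_cmul: "lap_x m (cst c * P) = cst c * lap_x m P" by (simp add: lap_x_def dv_cmul sum_distrib_left)
lemma lapu_cmul: "lap_u m (cst c * P) = cst c * lap_u m P" by (simp add: lap_u_def dv_cmul sum_distrib_left)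
lemma D_cmul: "du_dx m (cst c * P) = cst c * du_dx m P" by (simp add: du_dx_def dv_cmul sum_distrib_left)
lemma A_cmul: "u_dx m (cst c * P) = cst c * u_dx m P" by (simp add: u_dx_def dv_mult sum_distrib_left ac_simps)
lemma B_cmul: "x_du m (cst c * P) = cst c * x_du m P" by (simp add: x_du_def dv_mult sum_distrib_left ac_simps)
lemma Ex_cmul: "Eulx m (cst c * P) = cst c * Eulx m P" by (simp add: Eulx_def dv_mult sum_distrib_left ac_simps)
lemma Eu_cmul: "Eulu m (cst c * P) = cst c * Eulu m P" by (simp add: Eulu_def dv_mult sum_distrib_left ac_simps)

lemma lapx_0[simp]: "lap_x m 0 = 0" by (simp add: lap_x_def)
lemma lapu_0[simp]: "lap_u m 0 = 0" by (simp add: lap_u_def)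
lemma D_0[simp]: "du_dx m 0 = 0" by (simp add: du_dx_def)
lemma A_0[simp]: "u_dx m 0 = 0" by (simp add: u_dx_def)
lemma B_0[simp]: "x_du m 0 = 0" by (simp add: x_du_def)

lemma lapx_minus: "lap_x m (P - Q) = lap_x m P - lap_x m Q" by (simp add: lap_x_def dv_minus sum_subtractf)
lemma lapu_minus: "lap_u m (P - Q) = lap_u m P - lap_u m Q" by (simp add: lap_u_def dv_minus sum_subtractf)
lemma D_minus: "du_dx m (P - Q) = du_dx m P - du_dx m Q" by (simp add: du_dx_def dv_minus sum_subtractf)
lemma A_minus: "u_dx m (P - Q) = u_dx m P - u_dx m Q" by (simp add: u_dx_def dv_minus sum_subtractf algebra_simps)
lemma B_minus: "x_du m (P - Q) = x_du m P - x_du m Q" by (simp add: x_du_def dv_minus sum_subtractf algebra_simps)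

lemmas lin = lapx_add lapu_add D_add A_add B_add Ex_add Eu_add lapx_cmul lapu_cmul D_cmul A_cmul B_cmul Ex_cmul Eu_cmul
   lapx_minus lapu_minus D_minus A_minus B_minus

lemma L1: "lap_x m (normsq_x m * F) = normsq_x m * lap_x m F + 4 * Eulx m F + 2 * of_nat m * F"
proof -
  have "\<And>j. j < m \<Longrightarrow> pderiv_var j (pderiv_var j (normsq_x m * F)) =
     normsq_x m * pderiv_var j (pderiv_var j F) + 4 * (pvar j * pderiv_var j F) + 2 * F"
    by (simp add: dvs dv_xx; simp add: algebra_simps)
  then have "lap_x m (normsq_x m * F) = (\<Sum>j<m. normsq_x m * pderiv_var j (pderiv_var j F) + 4 * (pvar j * pderiv_var j F) + 2 * F)"
    unfolding lap_x_def by (intro sum.cong) auto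
  then show ?thesis by (simp add: sum.distrib sum_distrib_left lap_x_def Eulx_def algebra_simps)
qed

lemma L2: "lap_u m (normsq_u m * F) = normsq_u m * lap_u m F + 4 * Eulu m F + 2 * of_nat m * F"
proof -
  have "\<And>j. j < m \<Longrightarrow> pderiv_var (m+j) (pderiv_var (m+j) (normsq_u m * F)) =
     normsq_u m * pderiv_var (m+j) (pderiv_var (m+j) F) + 4 * (pvar (m+j) * pderiv_var (m+j) F) + 2 * F"
    by (simp add: dvs dv_xx; simp add: algebra_simps)
  then have "lap_u m (normsq_u m * F) = (\<Sum>j<m. normsq_u m * pderiv_var (m+j) (pderiv_var (m+j) F) + 4 * (pvar (m+j) * pderiv_var (m+j) F) + 2 * F)"
    unfolding lap_u_def by (intro sum.cong) auto
  then show ?thesis by (simp add: sum.distrib sum_distrib_left lap_u_def Eulu_def algebra_simps)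
qed

lemma L3a: "lap_x m (normsq_u m * F) = normsq_u m * lap_x m F"
  unfolding lap_x_def sum_distrib_left by (intro sum.cong) (simp_all add: dvs)
lemma L3b: "lap_u m (normsq_x m * F) = normsq_x m * lap_u m F"
  unfolding lap_u_def sum_distrib_left by (intro sum.cong) (simp_all add: dvs)

lemma L4a: "lap_x m (ux m * F) = ux m * lap_x m F + 2 * u_dx m F"
proof -
  have "\<And>j. j < m \<Longrightarrow> pderiv_var j (pderiv_var j (ux m * F)) =
     ux m * pderiv_var j (pderiv_var j F) + 2 * (pvar (m+j) * pderiv_var j F)"
    by (simp add: dvs dv_xx; simp add: algebra_simps)
  then have "lap_x m (ux m * F) = (\<Sum>j<m. ux m * pderiv_var j (pderiv_var j F) + 2 * (pvar (m+j) * pderiv_var j F))"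
    unfolding lap_x_def by (intro sum.cong) auto
  then show ?thesis by (simp add: sum.distrib sum_distrib_left lap_x_def u_dx_def)
qed

lemma L4b: "lap_u m (ux m * F) = ux m * lap_u m F + 2 * x_du m F"
proof -
  have "\<And>j. j < m \<Longrightarrow> pderiv_var (m+j) (pderiv_var (m+j) (ux m * F)) =
     ux m * pderiv_var (m+j) (pderiv_var (m+j) F) + 2 * (pvar j * pderiv_var (m+j) F)"
    by (simp add: dvs dv_xx; simp add: algebra_simps)
  then have "lap_u m (ux m * F) = (\<Sum>j<m. ux m * pderiv_var (m+j) (pderiv_var (m+j) F) + 2 * (pvar j * pderiv_var (m+j) F))"
    unfolding lap_u_def by (intro sum.cong) auto
  then show ?thesis by (simp add: sum.distrib sum_distrib_left lap_u_def x_du_def)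
qed

lemma dvx_xmul: "pderiv_var j (pvar k * G) = (if j = k then G else 0) + pvar k * pderiv_var j G"
  by (simp add: dv_mult dv_pvar)
lemma dvx_umul: "j < m \<Longrightarrow> pderiv_var j (pvar (m+k) * G) = pvar (m+k) * pderiv_var j G"
  by (simp add: dv_mult dv_pvar)
lemma dvu_xmul: "k < m \<Longrightarrow> pderiv_var (m+j) (pvar k * G) = pvar k * pderiv_var (m+j) G"
  by (simp add: dv_mult dv_pvar)
lemma dvu_umul: "pderiv_var (m+j) (pvar (m+k) * G) = (if j = k then G else 0) + pvar (m+k) * pderiv_var (m+j) G"
  by (simp add: dv_mult dv_pvar)

lemma dvc3: "pderiv_var k (pderiv_var j (pderiv_var i F)) = pderiv_var j (pderiv_var i (pderiv_var k F))"
  by (metis dv_comm)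
lemma dvc3': "pderiv_var k (pderiv_var j (pderiv_var i F)) = pderiv_var i (pderiv_var k (pderiv_var j F))"
  by (metis dv_comm)

lemma L5a: "lap_x m (u_dx m F) = u_dx m (lap_x m F)"
proof -
  have "lap_x m (u_dx m F) = (\<Sum>j<m. \<Sum>k<m. pvar (m+k) * pderiv_var j (pderiv_var j (pderiv_var k F)))"
    unfolding lap_x_def u_dx_def by (simp add: dv_sum dvx_umul)
  also have "\<dots> = (\<Sum>k<m. \<Sum>j<m. pvar (m+k) * pderiv_var k (pderiv_var j (pderiv_var j F)))"
    by (subst sum.swap) (simp add: dvc3)
  also have "\<dots> = u_dx m (lap_x m F)"
    unfolding lap_x_def u_dx_def by (simp add: dv_sum sum_distrib_left)
  finally show ?thesis .
qed

lemma L5b: "lap_u m (u_dx m F) = u_dx m (lap_u m F) + 2 * du_dx m F"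
proof -
  have "lap_u m (u_dx m F) = (\<Sum>j<m. \<Sum>k<m. pvar (m+k) * pderiv_var (m+j) (pderiv_var (m+j) (pderiv_var k F)))
          + (\<Sum>j<m. 2 * pderiv_var (m+j) (pderiv_var j F))"
    unfolding lap_u_def u_dx_def by (simp add: dv_sum dvu_umul dv_add sum.distrib if_distrib[of "pderiv_var _"] cong: if_cong)
  also have "(\<Sum>j<m. \<Sum>k<m. pvar (m+k) * pderiv_var (m+j) (pderiv_var (m+j) (pderiv_var k F)))
     = (\<Sum>k<m. \<Sum>j<m. pvar (m+k) * pderiv_var k (pderiv_var (m+j) (pderiv_var (m+j) F)))"
    by (subst sum.swap) (simp add: dvc3)
  finally show ?thesis
    unfolding lap_u_def u_dx_def du_dx_def by (simp add: dv_sum sum_distrib_left)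
qed

lemma dvc4: "pderiv_var a (pderiv_var a (pderiv_var b (pderiv_var c F))) = pderiv_var b (pderiv_var c (pderiv_var a (pderiv_var a F)))"
  by (metis dv_comm)

lemma L6a: "lap_x m (x_du m F) = x_du m (lap_x m F) + 2 * du_dx m F"
proof -
  have "lap_x m (x_du m F) = (\<Sum>j<m. \<Sum>k<m. pvar k * pderiv_var j (pderiv_var j (pderiv_var (m+k) F)))
          + (\<Sum>j<m. 2 * pderiv_var j (pderiv_var (m+j) F))"
    unfolding lap_x_def x_du_def by (simp add: dv_sum dvx_xmul dv_add sum.distrib if_distrib[of "pderiv_var _"] cong: if_cong)
  also have "(\<Sum>j<m. \<Sum>k<m. pvar k * pderiv_var j (pderiv_var j (pderiv_var (m+k) F)))
     = (\<Sum>k<m. \<Sum>j<m. pvar k * pderiv_var (m+k) (pderiv_var j (pderiv_var j F)))"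
    by (subst sum.swap) (simp add: dvc3)
  finally show ?thesis
    unfolding lap_x_def x_du_def du_dx_def by (simp add: dv_sum sum_distrib_left dv_comm[of "m+_"])
qed

lemma L6b: "lap_u m (x_du m F) = x_du m (lap_u m F)"
proof -
  have "lap_u m (x_du m F) = (\<Sum>j<m. \<Sum>k<m. pvar k * pderiv_var (m+j) (pderiv_var (m+j) (pderiv_var (m+k) F)))"
    unfolding lap_u_def x_du_def by (simp add: dv_sum dvu_xmul)
  also have "\<dots> = (\<Sum>k<m. \<Sum>j<m. pvar k * pderiv_var (m+k) (pderiv_var (m+j) (pderiv_var (m+j) F)))"
    by (subst sum.swap) (simp add: dvc3)
  also have "\<dots> = x_du m (lap_u m F)"
    unfolding lap_u_def x_du_def by (simp add: dv_sum sum_distrib_left)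
  finally show ?thesis .
qed

lemma L7a: "lap_x m (du_dx m F) = du_dx m (lap_x m F)"
  unfolding lap_x_def du_dx_def dv_sum by (subst sum.swap) (intro sum.cong refl, rule dvc4)
lemma L7b: "lap_u m (du_dx m F) = du_dx m (lap_u m F)"
  unfolding lap_u_def du_dx_def dv_sum by (subst sum.swap) (intro sum.cong refl, rule dvc4)

lemma L8a: "du_dx m (normsq_x m * F) = normsq_x m * du_dx m F + 2 * x_du m F"
proof -
  have "\<And>j. j < m \<Longrightarrow> pderiv_var (m+j) (pderiv_var j (normsq_x m * F)) =
     normsq_x m * pderiv_var (m+j) (pderiv_var j F) + 2 * (pvar j * pderiv_var (m+j) F)"
    by (simp add: dvs dv_xx; simp add: algebra_simps)
  then have "du_dx m (normsq_x m * F) = (\<Sum>j<m. normsq_x m * pderiv_var (m+j) (pderiv_var j F) + 2 * (pvar j * pderiv_var (m+j) F))"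
    unfolding du_dx_def by (intro sum.cong) auto
  then show ?thesis by (simp add: sum.distrib sum_distrib_left du_dx_def x_du_def)
qed

lemma L8b: "du_dx m (normsq_u m * F) = normsq_u m * du_dx m F + 2 * u_dx m F"
proof -
  have "\<And>j. j < m \<Longrightarrow> pderiv_var (m+j) (pderiv_var j (normsq_u m * F)) =
     normsq_u m * pderiv_var (m+j) (pderiv_var j F) + 2 * (pvar (m+j) * pderiv_var j F)"
    by (simp add: dvs dv_xx; simp add: algebra_simps)
  then have "du_dx m (normsq_u m * F) = (\<Sum>j<m. normsq_u m * pderiv_var (m+j) (pderiv_var j F) + 2 * (pvar (m+j) * pderiv_var j F))"
    unfolding du_dx_def by (intro sum.cong) auto
  then show ?thesis by (simp add: sum.distrib sum_distrib_left du_dx_def u_dx_def)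
qed

lemma L8c: "du_dx m (ux m * F) = ux m * du_dx m F + Eulx m F + Eulu m F + of_nat m * F"
proof -
  have "\<And>j. j < m \<Longrightarrow> pderiv_var (m+j) (pderiv_var j (ux m * F)) =
     ux m * pderiv_var (m+j) (pderiv_var j F) + pvar j * pderiv_var j F + pvar (m+j) * pderiv_var (m+j) F + F"
    by (simp add: dvs dv_xx; simp add: algebra_simps)
  then have "du_dx m (ux m * F) = (\<Sum>j<m. ux m * pderiv_var (m+j) (pderiv_var j F) + pvar j * pderiv_var j F + pvar (m+j) * pderiv_var (m+j) F + F)"
    unfolding du_dx_def by (intro sum.cong) auto
  then show ?thesis by (simp add: sum.distrib sum_distrib_left du_dx_def Eulx_def Eulu_def)
qed

lemma L9a: "du_dx m (u_dx m F) = u_dx m (du_dx m F) + lap_x m F"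
proof -
  have "du_dx m (u_dx m F) = (\<Sum>j<m. \<Sum>k<m. pvar (m+k) * pderiv_var (m+j) (pderiv_var j (pderiv_var k F)))
          + (\<Sum>j<m. pderiv_var j (pderiv_var j F))"
    unfolding du_dx_def u_dx_def
    by (simp add: dv_sum dvx_umul dvu_umul dv_add sum.distrib if_distrib[of "pderiv_var _"] cong: if_cong)
  also have "(\<Sum>j<m. \<Sum>k<m. pvar (m+k) * pderiv_var (m+j) (pderiv_var j (pderiv_var k F)))
     = (\<Sum>k<m. \<Sum>j<m. pvar (m+k) * pderiv_var k (pderiv_var (m+j) (pderiv_var j F)))"
    by (subst sum.swap) (simp add: dvc3')
  finally show ?thesis
    unfolding lap_x_def u_dx_def du_dx_def by (simp add: dv_sum sum_distrib_left)
qed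

lemma L9b: "du_dx m (x_du m F) = x_du m (du_dx m F) + lap_u m F"
proof -
  have "du_dx m (x_du m F) = (\<Sum>j<m. \<Sum>k<m. pvar k * pderiv_var (m+j) (pderiv_var j (pderiv_var (m+k) F)))
          + (\<Sum>j<m. pderiv_var (m+j) (pderiv_var (m+j) F))"
    unfolding du_dx_def x_du_def
    by (simp add: dv_sum dvx_xmul dvu_xmul dv_add sum.distrib if_distrib[of "pderiv_var _"] cong: if_cong)
  also have "(\<Sum>j<m. \<Sum>k<m. pvar k * pderiv_var (m+j) (pderiv_var j (pderiv_var (m+k) F)))
     = (\<Sum>k<m. \<Sum>j<m. pvar k * pderiv_var (m+k) (pderiv_var (m+j) (pderiv_var j F)))"
    by (subst sum.swap) (simp add: dvc3')
  finally show ?thesis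
    unfolding lap_u_def x_du_def du_dx_def by (simp add: dv_sum sum_distrib_left)
qed

lemma L10a: "u_dx m (normsq_x m * F) = normsq_x m * u_dx m F + 2 * ux m * F"
proof -
  have "\<And>j. j < m \<Longrightarrow> pvar (m+j) * pderiv_var j (normsq_x m * F) =
     normsq_x m * (pvar (m+j) * pderiv_var j F) + 2 * (pvar (m+j) * pvar j) * F"
    by (simp add: dvs dv_xx; simp add: algebra_simps)
  then have "u_dx m (normsq_x m * F) = (\<Sum>j<m. normsq_x m * (pvar (m+j) * pderiv_var j F) + 2 * (pvar (m+j) * pvar j) * F)"
    unfolding u_dx_def by (intro sum.cong) auto
  then show ?thesis by (simp add: sum.distrib sum_distrib_left sum_distrib_right u_dx_def ux_def)
qed

lemma L10b: "u_dx m (normsq_u m * F) = normsq_u m * u_dx m F"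
  unfolding u_dx_def sum_distrib_left by (intro sum.cong) (simp_all add: dvs algebra_simps)

lemma L10c: "u_dx m (ux m * F) = ux m * u_dx m F + normsq_u m * F"
proof -
  have "\<And>j. j < m \<Longrightarrow> pvar (m+j) * pderiv_var j (ux m * F) =
     ux m * (pvar (m+j) * pderiv_var j F) + pvar (m+j)^2 * F"
    by (simp add: dvs dv_xx; simp add: algebra_simps power2_eq_square)
  then have "u_dx m (ux m * F) = (\<Sum>j<m. ux m * (pvar (m+j) * pderiv_var j F) + pvar (m+j)^2 * F)"
    unfolding u_dx_def by (intro sum.cong) auto
  then show ?thesis by (simp add: sum.distrib sum_distrib_left sum_distrib_right u_dx_def normsq_u_def)
qed

lemma L11a: "x_du m (normsq_u m * F) = normsq_u m * x_du m F + 2 * ux m * F"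
proof -
  have "\<And>j. j < m \<Longrightarrow> pvar j * pderiv_var (m+j) (normsq_u m * F) =
     normsq_u m * (pvar j * pderiv_var (m+j) F) + 2 * (pvar (m+j) * pvar j) * F"
    by (simp add: dvs dv_xx; simp add: algebra_simps)
  then have "x_du m (normsq_u m * F) = (\<Sum>j<m. normsq_u m * (pvar j * pderiv_var (m+j) F) + 2 * (pvar (m+j) * pvar j) * F)"
    unfolding x_du_def by (intro sum.cong) auto
  then show ?thesis by (simp add: sum.distrib sum_distrib_left sum_distrib_right x_du_def ux_def)
qed

lemma L11b: "x_du m (normsq_x m * F) = normsq_x m * x_du m F"
  unfolding x_du_def sum_distrib_left by (intro sum.cong) (simp_all add: dvs mult.left_commute)

lemma L11c: "x_du m (ux m * F) = ux m * x_du m F + normsq_x m * F"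
proof -
  have "\<And>j. j < m \<Longrightarrow> pvar j * pderiv_var (m+j) (ux m * F) =
     ux m * (pvar j * pderiv_var (m+j) F) + pvar j^2 * F"
    by (simp add: dvs dv_xx; simp add: algebra_simps power2_eq_square)
  then have "x_du m (ux m * F) = (\<Sum>j<m. ux m * (pvar j * pderiv_var (m+j) F) + pvar j^2 * F)"
    unfolding x_du_def by (intro sum.cong) auto
  then show ?thesis by (simp add: sum.distrib sum_distrib_left sum_distrib_right x_du_def normsq_x_def)
qed

lemma L12: "x_du m (u_dx m F) = u_dx m (x_du m F) + Eulx m F - Eulu m F"
proof -
  have "x_du m (u_dx m F) = (\<Sum>j<m. \<Sum>k<m. pvar j * (pvar (m+k) * pderiv_var (m+j) (pderiv_var k F)))
          + Eulx m F"
    unfolding x_du_def u_dx_def Eulx_def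
    by (simp add: dv_sum dvu_umul distrib_left sum.distrib sum_distrib_left if_distrib[of "(*) _"] cong: if_cong)
  moreover have "u_dx m (x_du m F) = (\<Sum>k<m. \<Sum>j<m. pvar (m+k) * (pvar j * pderiv_var k (pderiv_var (m+j) F)))
          + Eulu m F"
    unfolding x_du_def u_dx_def Eulu_def
    by (simp add: dv_sum dvx_xmul distrib_left sum.distrib sum_distrib_left if_distrib[of "(*) _"] cong: if_cong)
  moreover have "(\<Sum>j<m. \<Sum>k<m. pvar j * (pvar (m+k) * pderiv_var (m+j) (pderiv_var k F)))
     = (\<Sum>k<m. \<Sum>j<m. pvar (m+k) * (pvar j * pderiv_var k (pderiv_var (m+j) F)))"
    by (subst sum.swap) (intro sum.cong refl, subst dv_comm, rule mult.left_commute)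
  ultimately show ?thesis by simp
qed


lemma Pspace_iff: "P \<in> Pspace m p q \<longleftrightarrow> (\<forall>a\<in>Poly_Mapping.keys P. Poly_Mapping.keys a \<subseteq> {..<2*m}
      \<and> (\<Sum>j<m. lk a j) = p \<and> (\<Sum>j<m. lk a (m + j)) = q)"
  by (simp add: Pspace_def)

lemma P_zero[simp]: "0 \<in> Pspace m p q" by (simp add: Pspace_iff)
lemma P_add: "P \<in> Pspace m p q \<Longrightarrow> Q \<in> Pspace m p q \<Longrightarrow> P + Q \<in> Pspace m p q"
  unfolding Pspace_iff using keys_add[of P Q] by blast
lemma P_cmul: "P \<in> Pspace m p q \<Longrightarrow> cst c * P \<in> Pspace m p q"
  unfolding Pspace_iff by (auto simp: in_keys_iff lookup_cmul)
lemma P_uminus: "P \<in> Pspace m p q \<Longrightarrow> - P \<in> Pspace m p q"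
  unfolding Pspace_iff by (auto simp: in_keys_iff)
lemma P_minus: "P \<in> Pspace m p q \<Longrightarrow> Q \<in> Pspace m p q \<Longrightarrow> P - Q \<in> Pspace m p q"
  using P_add[OF _ P_uminus] by (metis diff_conv_add_uminus)
lemma P_sum: "(\<And>i. i \<in> S \<Longrightarrow> f i \<in> Pspace m p q) \<Longrightarrow> sum f S \<in> Pspace m p q"
  by (induction S rule: infinite_finite_induct) (auto intro: P_add)
lemma P_ofnat: "P \<in> Pspace m p q \<Longrightarrow> of_nat n * P \<in> Pspace m p q"
  using P_cmul[of P m p q "of_nat n"] by (simp add: cst_of_nat)
lemma P_numeral: "P \<in> Pspace m p q \<Longrightarrow> numeral n * P \<in> Pspace m p q"
  using P_cmul[of P m p q "numeral n"] by (simp add: cst_numeral)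

lemma keys_pvar_mult: "b \<in> Poly_Mapping.keys (pvar i * P) \<Longrightarrow> \<exists>a\<in>Poly_Mapping.keys P. b = ev i + a"
proof -
  assume b: "b \<in> Poly_Mapping.keys (pvar i * P)"
  then have "1 \<le> lk b i" "b - ev i \<in> Poly_Mapping.keys P"
    by (auto simp: in_keys_iff lk_pvar_mult split: if_splits)
  moreover have "ev i + (b - ev i) = b" using ev_add_eq[of i "b - ev i" b] \<open>1 \<le> lk b i\<close> by simp
  ultimately show ?thesis by (metis bexI)
qed

lemma sum_single_lt: "(\<Sum>k<m. lk (Poly_Mapping.single i (n::nat)) k) = (if i < (m::nat) then n else 0)"
  by (simp add: lookup_single when_def sum.delta sum.delta')
lemma sum_single_ltu: "(\<Sum>k<m. lk (Poly_Mapping.single (i::nat) (n::nat)) (m + k)) = (if m \<le> i \<and> i < 2*m then n else 0)"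
proof -
  have "(\<Sum>k<m. lk (Poly_Mapping.single i n) (m + k)) = (\<Sum>k<m. if k = i - m \<and> m \<le> i then n else 0)"
    by (rule sum.cong) (auto simp: lookup_single when_def)
  then show ?thesis by (auto simp: sum.delta)
qed

lemma P_xmul: assumes "j < m" "P \<in> Pspace m p q" shows "pvar j * P \<in> Pspace m (Suc p) q"
  unfolding Pspace_iff
proof
  fix b assume "b \<in> Poly_Mapping.keys (pvar j * P)"
  then obtain a where a: "a \<in> Poly_Mapping.keys P" "b = ev j + a" using keys_pvar_mult by blast
  then have k: "Poly_Mapping.keys a \<subseteq> {..<2*m}" "(\<Sum>k<m. lk a k) = p" "(\<Sum>k<m. lk a (m+k)) = q"
    using assms(2) unfolding Pspace_iff by auto
  show "Poly_Mapping.keys b \<subseteq> {..<2*m} \<and> (\<Sum>k<m. lk b k) = Suc p \<and> (\<Sum>k<m. lk b (m + k)) = q"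
    using k assms(1) keys_add[of "ev j" a] unfolding a(2)
    by (auto simp: lookup_add sum.distrib sum_single_lt sum_single_ltu)
qed

lemma P_umul: assumes "j < m" "P \<in> Pspace m p q" shows "pvar (m+j) * P \<in> Pspace m p (Suc q)"
  unfolding Pspace_iff
proof
  fix b assume "b \<in> Poly_Mapping.keys (pvar (m+j) * P)"
  then obtain a where a: "a \<in> Poly_Mapping.keys P" "b = ev (m+j) + a" using keys_pvar_mult by blast
  then have k: "Poly_Mapping.keys a \<subseteq> {..<2*m}" "(\<Sum>k<m. lk a k) = p" "(\<Sum>k<m. lk a (m+k)) = q"
    using assms(2) unfolding Pspace_iff by auto
  show "Poly_Mapping.keys b \<subseteq> {..<2*m} \<and> (\<Sum>k<m. lk b k) = p \<and> (\<Sum>k<m. lk b (m + k)) = Suc q"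
    using k assms(1) keys_add[of "ev (m+j)" a] unfolding a(2)
    by (auto simp: lookup_add sum.distrib sum_single_lt sum_single_ltu)
qed

lemma keys_dv: "c \<in> Poly_Mapping.keys (pderiv_var i P) \<Longrightarrow> c + ev i \<in> Poly_Mapping.keys P"
  by (auto simp: in_keys_iff lookup_dv)

lemma P_dx: assumes "j < m" "P \<in> Pspace m p q" shows "pderiv_var j P \<in> Pspace m (p - 1) q"
  unfolding Pspace_iff
proof
  fix c assume "c \<in> Poly_Mapping.keys (pderiv_var j P)"
  then have a: "c + ev j \<in> Poly_Mapping.keys P" by (rule keys_dv)
  then have k: "Poly_Mapping.keys (c + ev j) \<subseteq> {..<2*m}" "(\<Sum>k<m. lk (c + ev j) k) = p" "(\<Sum>k<m. lk (c + ev j) (m+k)) = q"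
    using assms(2) unfolding Pspace_iff by auto
  have kc: "Poly_Mapping.keys c \<subseteq> Poly_Mapping.keys (c + ev j)" by (auto simp: in_keys_iff lookup_add)
  show "Poly_Mapping.keys c \<subseteq> {..<2*m} \<and> (\<Sum>k<m. lk c k) = p - 1 \<and> (\<Sum>k<m. lk c (m + k)) = q"
    using k kc assms(1) by (auto simp: lookup_add sum.distrib sum_single_lt sum_single_ltu)
qed

lemma P_du: assumes "j < m" "P \<in> Pspace m p q" shows "pderiv_var (m+j) P \<in> Pspace m p (q - 1)"
  unfolding Pspace_iff
proof
  fix c assume "c \<in> Poly_Mapping.keys (pderiv_var (m+j) P)"
  then have a: "c + ev (m+j) \<in> Poly_Mapping.keys P" by (rule keys_dv)
  then have k: "Poly_Mapping.keys (c + ev (m+j)) \<subseteq> {..<2*m}" "(\<Sum>k<m. lk (c + ev (m+j)) k) = p" "(\<Sum>k<m. lk (c + ev (m+j)) (m+k)) = q"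
    using assms(2) unfolding Pspace_iff by auto
  have kc: "Poly_Mapping.keys c \<subseteq> Poly_Mapping.keys (c + ev (m+j))" by (auto simp: in_keys_iff lookup_add)
  show "Poly_Mapping.keys c \<subseteq> {..<2*m} \<and> (\<Sum>k<m. lk c k) = p \<and> (\<Sum>k<m. lk c (m + k)) = q - 1"
    using k kc assms(1) by (auto simp: lookup_add sum.distrib sum_single_lt sum_single_ltu)
qed

lemma dx_zero: assumes "j < m" "P \<in> Pspace m 0 q" shows "pderiv_var j P = 0"
proof (rule poly_mapping_eqI)
  fix c
  have "c + ev j \<notin> Poly_Mapping.keys P"
  proof
    assume "c + ev j \<in> Poly_Mapping.keys P"
    then have "(\<Sum>k<m. lk (c + ev j) k) = 0" using assms(2) unfolding Pspace_iff by auto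
    then show False using assms(1) by (simp add: lookup_add sum.distrib sum_single_lt)
  qed
  then show "lk (pderiv_var j P) c = lk 0 c" by (simp add: lookup_dv in_keys_iff)
qed

lemma du_zero: assumes "j < m" "P \<in> Pspace m p 0" shows "pderiv_var (m+j) P = 0"
proof (rule poly_mapping_eqI)
  fix c
  have "c + ev (m+j) \<notin> Poly_Mapping.keys P"
  proof
    assume "c + ev (m+j) \<in> Poly_Mapping.keys P"
    then have "(\<Sum>k<m. lk (c + ev (m+j)) (m+k)) = 0" using assms(2) unfolding Pspace_iff by auto
    then show False using assms(1) by (simp add: lookup_add sum.distrib sum_single_ltu)
  qed
  then show "lk (pderiv_var (m+j) P) c = lk 0 c" by (simp add: lookup_dv in_keys_iff)
qed

lemma Euler_x: assumes "P \<in> Pspace m p q" shows "Eulx m P = of_nat p * P"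
proof (rule poly_mapping_eqI)
  fix c
  have "lk (Eulx m P) c = (\<Sum>j<m. of_nat (lk c j) * lk P c)"
    unfolding Eulx_def lookup_sum
    by (rule sum.cong) (auto simp: lk_pvar_mult lookup_dv lookup_minus_nat ev_cancel)
  also have "\<dots> = of_nat (\<Sum>j<m. lk c j) * lk P c" by (simp add: sum_distrib_right)
  also have "\<dots> = of_nat p * lk P c"
    using assms unfolding Pspace_iff by (cases "c \<in> Poly_Mapping.keys P") (auto simp: in_keys_iff)
  finally show "lk (Eulx m P) c = lk (of_nat p * P) c" by (simp flip: cst_of_nat add: lookup_cmul)
qed

lemma Euler_u: assumes "P \<in> Pspace m p q" shows "Eulu m P = of_nat q * P"
proof (rule poly_mapping_eqI)
  fix c
  have "lk (Eulu m P) c = (\<Sum>j<m. of_nat (lk c (m+j)) * lk P c)"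
    unfolding Eulu_def lookup_sum
    by (rule sum.cong) (auto simp: lk_pvar_mult lookup_dv lookup_minus_nat ev_cancel)
  also have "\<dots> = of_nat (\<Sum>j<m. lk c (m+j)) * lk P c" by (simp add: sum_distrib_right)
  also have "\<dots> = of_nat q * lk P c"
    using assms unfolding Pspace_iff by (cases "c \<in> Poly_Mapping.keys P") (auto simp: in_keys_iff)
  finally show "lk (Eulu m P) c = lk (of_nat q * P) c" by (simp flip: cst_of_nat add: lookup_cmul)
qed


lemma X2_expand: "normsq_x m * F = (\<Sum>j<m. pvar j * (pvar j * F))"
  by (simp add: normsq_x_def sum_distrib_right power2_eq_square mult.assoc)
lemma U2_expand: "normsq_u m * F = (\<Sum>j<m. pvar (m+j) * (pvar (m+j) * F))"
  by (simp add: normsq_u_def sum_distrib_right power2_eq_square mult.assoc)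
lemma Q_expand: "ux m * F = (\<Sum>j<m. pvar (m+j) * (pvar j * F))"
  by (simp add: ux_def sum_distrib_right mult.assoc)

lemma P_X2: "F \<in> Pspace m p q \<Longrightarrow> normsq_x m * F \<in> Pspace m (p+2) q"
  unfolding X2_expand by (intro P_sum) (auto intro!: P_xmul)
lemma P_U2: "F \<in> Pspace m p q \<Longrightarrow> normsq_u m * F \<in> Pspace m p (q+2)"
  unfolding U2_expand by (intro P_sum) (auto intro!: P_umul)
lemma P_Q: "F \<in> Pspace m p q \<Longrightarrow> ux m * F \<in> Pspace m (p+1) (q+1)"
  unfolding Q_expand by (intro P_sum) (metis P_umul P_xmul Suc_eq_plus1 lessThan_iff)
lemma P_A: "F \<in> Pspace m p q \<Longrightarrow> u_dx m F \<in> Pspace m (p-1) (q+1)"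
  unfolding u_dx_def by (intro P_sum) (metis P_umul P_dx Suc_eq_plus1 lessThan_iff)
lemma P_B: "F \<in> Pspace m p q \<Longrightarrow> x_du m F \<in> Pspace m (p+1) (q-1)"
  unfolding x_du_def by (intro P_sum) (metis P_xmul P_du Suc_eq_plus1 lessThan_iff)
lemma P_D: "F \<in> Pspace m p q \<Longrightarrow> du_dx m F \<in> Pspace m (p-1) (q-1)"
  unfolding du_dx_def by (intro P_sum) (metis P_du P_dx lessThan_iff)
lemma P_lapx: "F \<in> Pspace m p q \<Longrightarrow> lap_x m F \<in> Pspace m (p-2) q"
  unfolding lap_x_def by (intro P_sum) (metis P_dx diff_diff_left lessThan_iff one_add_one)
lemma P_lapu: "F \<in> Pspace m p q \<Longrightarrow> lap_u m F \<in> Pspace m p (q-2)"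
  unfolding lap_u_def by (intro P_sum) (metis P_du diff_diff_left lessThan_iff one_add_one)

lemma A_zero: "F \<in> Pspace m 0 q \<Longrightarrow> u_dx m F = 0"
  unfolding u_dx_def by (simp add: dx_zero)
lemma D_zero1: "F \<in> Pspace m 0 q \<Longrightarrow> du_dx m F = 0"
  unfolding du_dx_def by (simp add: dx_zero)
lemma B_zero: "F \<in> Pspace m p 0 \<Longrightarrow> x_du m F = 0"
  unfolding x_du_def by (simp add: du_zero)
lemma D_zero2: "F \<in> Pspace m p 0 \<Longrightarrow> du_dx m F = 0"
proof -
  assume F: "F \<in> Pspace m p 0"
  have "\<And>j. j < m \<Longrightarrow> pderiv_var (m+j) (pderiv_var j F) = 0"
    using P_dx[OF _ F] du_zero by (metis diff_0_eq_0)
  then show ?thesis unfolding du_dx_def by simp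
qed

lemma FA_X2: "fischer (normsq_x m * F) G = fischer F (lap_x m G)"
  unfolding X2_expand lap_x_def by (simp add: fischer_sum_left fischer_sum_right fischer_adj)
lemma FA_U2: "fischer (normsq_u m * F) G = fischer F (lap_u m G)"
  unfolding U2_expand lap_u_def by (simp add: fischer_sum_left fischer_sum_right fischer_adj)
lemma FA_Q: "fischer (ux m * F) G = fischer F (du_dx m G)"
  unfolding Q_expand du_dx_def by (simp add: fischer_sum_left fischer_sum_right fischer_adj dv_comm[of "m+_"])
lemma FA_A: "fischer (u_dx m F) G = fischer F (x_du m G)"
  unfolding u_dx_def x_du_def by (simp add: fischer_sum_left fischer_sum_right fischer_adj fischer_adj2)

definition inI :: "nat \<Rightarrow> cpoly \<Rightarrow> bool" where
  "inI m F \<longleftrightarrow> (\<exists>F1 F2. F = normsq_x m * F1 + normsq_u m * F2)"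

lemma inI_0[simp]: "inI m 0" unfolding inI_def by (rule exI[of _ 0], rule exI[of _ 0]) simp
lemma inI_X2[simp]: "inI m (normsq_x m * F)" unfolding inI_def by (rule exI[of _ F], rule exI[of _ 0]) simp
lemma inI_U2[simp]: "inI m (normsq_u m * F)" unfolding inI_def by (rule exI[of _ 0], rule exI[of _ F]) simp
lemma inI_add: "inI m F \<Longrightarrow> inI m G \<Longrightarrow> inI m (F + G)"
proof -
  assume "inI m F" "inI m G"
  then obtain F1 F2 G1 G2 where "F = normsq_x m * F1 + normsq_u m * F2" "G = normsq_x m * G1 + normsq_u m * G2"
    unfolding inI_def by blast
  then show ?thesis unfolding inI_def
    by (intro exI[of _ "F1 + G1"] exI[of _ "F2 + G2"]) (simp add: algebra_simps)
qed
lemma inI_mult: "inI m F \<Longrightarrow> inI m (R * F)"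
proof -
  assume "inI m F"
  then obtain F1 F2 where "F = normsq_x m * F1 + normsq_u m * F2" unfolding inI_def by blast
  then show ?thesis unfolding inI_def
    by (intro exI[of _ "R * F1"] exI[of _ "R * F2"]) (simp add: algebra_simps)
qed
lemma inI_mult2: "inI m F \<Longrightarrow> inI m (F * R)"
  using inI_mult[of m F R] by (simp add: mult.commute)
lemma inI_uminus: "inI m F \<Longrightarrow> inI m (- F)"
  using inI_mult[of m F "-1"] by simp
lemma inI_diff: "inI m F \<Longrightarrow> inI m G \<Longrightarrow> inI m (F - G)"
  using inI_add[OF _ inI_uminus] by (metis diff_conv_add_uminus)
lemma inI_sum: "(\<And>i. i \<in> S \<Longrightarrow> inI m (f i)) \<Longrightarrow> inI m (sum f S)"
  by (induction S rule: infinite_finite_induct) (auto intro: inI_add)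

lemma inI_harm_zero: assumes "inI m h" "lap_x m h = 0" "lap_u m h = 0" shows "h = 0"
proof -
  obtain F1 F2 where h: "h = normsq_x m * F1 + normsq_u m * F2" using assms(1) unfolding inI_def by blast
  have "fischer h h = fischer F1 (lap_x m h) + fischer F2 (lap_u m h)"
    by (subst (1) h) (simp add: fischer_add_left FA_X2 FA_U2)
  then have "fischer h h = 0" using assms by simp
  then show ?thesis by (rule fischer_self_zero)
qed

lemma inI_harm_eq: assumes "inI m (h1 - h2)" "lap_x m h1 = 0" "lap_u m h1 = 0" "lap_x m h2 = 0" "lap_u m h2 = 0"
  shows "h1 = h2"
  using inI_harm_zero[OF assms(1)] assms by (simp add: lapx_minus lapu_minus)

lemma fischer_inI_harm: assumes "inI m F" "lap_x m h = 0" "lap_u m h = 0" shows "fischer F h = 0"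
proof -
  obtain F1 F2 where "F = normsq_x m * F1 + normsq_u m * F2" using assms(1) unfolding inI_def by blast
  then show ?thesis using assms by (simp add: fischer_add_left FA_X2 FA_U2)
qed

lemma decomp_inI:
  fixes H :: "nat \<Rightarrow> nat \<Rightarrow> cpoly"
  shows "inI m ((\<Sum>a\<le>A. \<Sum>b\<le>B. normsq_x m ^ a * normsq_u m ^ b * H a b) - H 0 0)"
proof -
  let ?f = "\<lambda>a b. normsq_x m ^ a * normsq_u m ^ b * H a b"
  have split: "?f a b = (if a = 0 \<and> b = 0 then H 0 0 else 0) + (if a = 0 \<and> b = 0 then 0 else ?f a b)" for a b
    by auto
  have "(\<Sum>a\<le>A. \<Sum>b\<le>B. ?f a b) = (\<Sum>a\<le>A. \<Sum>b\<le>B. (if a = 0 \<and> b = 0 then H 0 0 else 0))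
          + (\<Sum>a\<le>A. \<Sum>b\<le>B. (if a = 0 \<and> b = 0 then 0 else ?f a b))"
    by (subst split) (simp add: sum.distrib)
  also have "(\<Sum>a\<le>A. \<Sum>b\<le>B. (if a = 0 \<and> b = 0 then H 0 0 else 0)) = H 0 0"
  proof -
    have i: "\<And>a. (\<Sum>b\<le>B. (if a = 0 \<and> b = 0 then H 0 0 else 0)) = (if a = 0 then H 0 0 else 0)"
      by (case_tac "a = 0") (simp_all add: sum.delta)
    show ?thesis by (simp only: i) (simp add: sum.delta)
  qed
  finally have e: "(\<Sum>a\<le>A. \<Sum>b\<le>B. ?f a b) - H 0 0 = (\<Sum>a\<le>A. \<Sum>b\<le>B. (if a = 0 \<and> b = 0 then 0 else ?f a b))"
    by simp
  have "inI m (if a = 0 \<and> b = 0 then 0 else ?f a b)" for a b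
  proof (cases "a = 0")
    case True
    show ?thesis
    proof (cases b)
      case (Suc b') then show ?thesis using True
        by (simp add: mult.assoc mult.left_commute inI_mult)
    qed (use True in simp)
  next
    case False
    then obtain a' where "a = Suc a'" by (cases a) auto
    then show ?thesis by (simp add: mult.assoc inI_mult)
  qed
  then show ?thesis unfolding e by (intro inI_sum) auto
qed

lemma pi_s_char:
  fixes H :: "nat \<Rightarrow> nat \<Rightarrow> cpoly"
  assumes P: "P \<in> Pspace m p q" and H: "\<And>a b. H a b \<in> Harm m (p - 2*a) (q - 2*b)"
    and Pe: "P = (\<Sum>a\<le>p div 2. \<Sum>b\<le>q div 2. normsq_x m ^ a * normsq_u m ^ b * H a b)"
  shows "pi_s m P = H 0 0"
  unfolding pi_s_def
proof (rule the_equality)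
  show "\<exists>p q H'. P \<in> Pspace m p q \<and> (\<forall>a b. H' a b \<in> Harm m (p - 2*a) (q - 2*b))
      \<and> P = (\<Sum>a\<le>p div 2. \<Sum>b\<le>q div 2. normsq_x m ^ a * normsq_u m ^ b * H' a b) \<and> H 0 0 = H' 0 0"
    using assms by blast
next
  fix h assume "\<exists>p q H'. P \<in> Pspace m p q \<and> (\<forall>a b. H' a b \<in> Harm m (p - 2*a) (q - 2*b))
      \<and> P = (\<Sum>a\<le>p div 2. \<Sum>b\<le>q div 2. normsq_x m ^ a * normsq_u m ^ b * H' a b) \<and> h = H' 0 0"
  then obtain p' q' H' where H': "\<And>a b. H' a b \<in> Harm m (p' - 2*a) (q' - 2*b)"
    and Pe': "P = (\<Sum>a\<le>p' div 2. \<Sum>b\<le>q' div 2. normsq_x m ^ a * normsq_u m ^ b * H' a b)" and h: "h = H' 0 0"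
    by blast
  have i1: "inI m (P - H 0 0)" by (subst Pe) (rule decomp_inI)
  have i2: "inI m (P - H' 0 0)" by (subst Pe') (rule decomp_inI)
  have c1: "inI m (h - H 0 0)" using inI_diff[OF i1 i2] h by (simp add: algebra_simps)
  have c2: "lap_x m (H 0 0) = 0" "lap_u m (H 0 0) = 0" using H[of 0 0] by (auto simp: Harm_def)
  have c3: "lap_x m h = 0" "lap_u m h = 0" using H'[of 0 0] unfolding h by (auto simp: Harm_def)
  show "h = H 0 0" by (rule inI_harm_eq[OF c1 c3 c2])
qed

lemma Harm_zero[simp]: "0 \<in> Harm m p q" by (simp add: Harm_def)

lemma sum_01: assumes "\<And>a. a \<ge> 2 \<Longrightarrow> g a = 0" "(A::nat) = 0 \<Longrightarrow> g 1 = 0"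
  shows "(\<Sum>a\<le>A. g a) = g 0 + (g 1 :: cpoly)"
proof (cases A)
  case 0 then show ?thesis using assms by simp
next
  case (Suc A')
  have "(\<Sum>a\<le>Suc A'. g a) = g 0 + g 1" for A'
  proof (induction A')
    case 0 then show ?case by simp
  next
    case (Suc n) then show ?case using assms(1)[of "Suc (Suc n)"] by simp
  qed
  then show ?thesis using Suc by simp
qed

lemma pi_s_4:
  assumes P: "P \<in> Pspace m p q"
    and h00: "h00 \<in> Harm m p q" and h10: "h10 \<in> Harm m (p-2) q" and h01: "h01 \<in> Harm m p (q-2)"
    and h11: "h11 \<in> Harm m (p-2) (q-2)"
    and zp: "p < 2 \<Longrightarrow> h10 = 0 \<and> h11 = 0" and zq: "q < 2 \<Longrightarrow> h01 = 0 \<and> h11 = 0"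
    and Pe: "P = h00 + normsq_x m * h10 + normsq_u m * h01 + normsq_x m * (normsq_u m * h11)"
  shows "pi_s m P = h00"
proof -
  define H where "H a b = (if a = 0 \<and> b = 0 then h00 else if a = 1 \<and> b = 0 then h10
     else if a = 0 \<and> b = 1 then h01 else if a = 1 \<and> b = 1 then h11 else 0)" for a b :: nat
  have H: "H a b \<in> Harm m (p - 2*a) (q - 2*b)" for a b
    unfolding H_def using h00 h10 h01 h11 by auto
  have inner: "(\<Sum>b\<le>q div 2. normsq_x m ^ a * normsq_u m ^ b * H a b) =
      normsq_x m ^ a * H a 0 + normsq_x m ^ a * normsq_u m * H a 1" for a
    by (subst sum_01) (use zq in \<open>auto simp: H_def\<close>)
  have "(\<Sum>a\<le>p div 2. \<Sum>b\<le>q div 2. normsq_x m ^ a * normsq_u m ^ b * H a b)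
      = (\<Sum>a\<le>p div 2. normsq_x m ^ a * H a 0 + normsq_x m ^ a * normsq_u m * H a 1)"
    by (simp only: inner)
  also have "\<dots> = h00 + normsq_x m * h10 + normsq_u m * h01 + normsq_x m * (normsq_u m * h11)"
    by (subst sum_01) (use zp in \<open>auto simp: H_def algebra_simps\<close>)
  finally have "P = (\<Sum>a\<le>p div 2. \<Sum>b\<le>q div 2. normsq_x m ^ a * normsq_u m ^ b * H a b)"
    using Pe by simp
  from pi_s_char[OF P H this] show ?thesis by (simp add: H_def)
qed


definition cx :: "nat \<Rightarrow> nat \<Rightarrow> complex" where "cx m n = of_nat m + 2 * of_nat n - 2"

lemma cx_nz: "m > 2 \<Longrightarrow> cx m n \<noteq> 0"
proof
  assume "m > 2" "cx m n = 0"
  then have "(of_nat (m + 2*n) :: complex) = of_nat 2" unfolding cx_def by (simp add: algebra_simps)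
  then have "m + 2*n = 2" using of_nat_eq_iff by blast
  then show False using \<open>m > 2\<close> by simp
qed

definition SU :: "nat \<Rightarrow> nat \<Rightarrow> cpoly \<Rightarrow> cpoly" where
  "SU m q h = u_dx m h - cst (1 / cx m q) * (normsq_u m * du_dx m h)"
definition SX :: "nat \<Rightarrow> nat \<Rightarrow> cpoly \<Rightarrow> cpoly" where
  "SX m p h = x_du m h - cst (1 / cx m p) * (normsq_x m * du_dx m h)"
definition CC :: "nat \<Rightarrow> nat \<Rightarrow> nat \<Rightarrow> cpoly \<Rightarrow> cpoly" where
  "CC m p q h = ux m * h - cst (1 / cx m p) * (normsq_x m * SU m q h) - cst (1 / cx m q) * (normsq_u m * SX m p h)
     - cst (1 / (cx m p * cx m q)) * (normsq_x m * (normsq_u m * du_dx m h))"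

definition Sxop :: "nat \<Rightarrow> cpoly \<Rightarrow> cpoly" where "Sxop m h = pi_s m (x_du m h)"

lemma cst_cst[simp]: "cst a * (cst b * X) = cst (a * b) * X"
  by (simp add: mult.assoc[symmetric] cst_mult)
lemma cst_numeral_mult: "numeral n * X = cst (numeral n) * X" by (simp add: cst_numeral)
lemma cst_of_nat_mult: "of_nat n * X = cst (of_nat n) * X" by (simp add: cst_of_nat)

lemma Harm_cmul: "h \<in> Harm m p q \<Longrightarrow> cst c * h \<in> Harm m p q"
  by (simp add: Harm_def P_cmul lin)

lemma HarmD: assumes "h \<in> Harm m p q" shows "h \<in> Pspace m p q" "lap_x m h = 0" "lap_u m h = 0"
  using assms by (auto simp: Harm_def)

lemma Harm_D: "h \<in> Harm m p q \<Longrightarrow> du_dx m h \<in> Harm m (p-1) (q-1)"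
  using P_D[of h m p q] L7a[of m h] L7b[of m h] by (auto simp: Harm_def)

lemma Dz_p: "h \<in> Harm m 0 q \<Longrightarrow> du_dx m h = 0" by (auto simp: Harm_def intro: D_zero1)
lemma Dz_q: "h \<in> Harm m p 0 \<Longrightarrow> du_dx m h = 0" by (auto simp: Harm_def intro: D_zero2)

lemmas cst_expand = cst_add[symmetric] cst_mult[symmetric] cst_diff[symmetric] cst_numeral cst_of_nat

lemma lapx_X2_harm:
  assumes "F \<in> Pspace m (p - 1) q'" "lap_x m F = 0" "p = 0 \<Longrightarrow> F = 0"
  shows "lap_x m (normsq_x m * F) = cst (2 * cx m p) * F"
proof (cases "p = 0")
  case True then show ?thesis using assms by simp
next
  case False
  have "lap_x m (normsq_x m * F) = 4 * (of_nat (p - 1) * F) + 2 * of_nat m * F"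
    using assms L1[of m F] Euler_x[OF assms(1)] by simp
  also have "cst (2 * cx m p) = 4 * of_nat (p - 1) + 2 * of_nat m"
    using False by (simp add: cx_def cst_expand of_nat_diff algebra_simps)
  then have "4 * (of_nat (p - 1) * F) + 2 * of_nat m * F = cst (2 * cx m p) * F" by algebra
  finally show ?thesis .
qed

lemma lapu_U2_harm:
  assumes "F \<in> Pspace m p' (q - 1)" "lap_u m F = 0" "q = 0 \<Longrightarrow> F = 0"
  shows "lap_u m (normsq_u m * F) = cst (2 * cx m q) * F"
proof (cases "q = 0")
  case True then show ?thesis using assms by simp
next
  case False
  have "lap_u m (normsq_u m * F) = 4 * (of_nat (q - 1) * F) + 2 * of_nat m * F"
    using assms L2[of m F] Euler_u[OF assms(1)] by simp
  also have "cst (2 * cx m q) = 4 * of_nat (q - 1) + 2 * of_nat m"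
    using False by (simp add: cx_def cst_expand of_nat_diff algebra_simps)
  then have "4 * (of_nat (q - 1) * F) + 2 * of_nat m * F = cst (2 * cx m q) * F" by algebra
  finally show ?thesis .
qed

lemma cst_inv2: "c \<noteq> 0 \<Longrightarrow> cst (1 / c) * cst (2 * c) = 2"
  by (simp add: cst_mult cst_numeral[symmetric])

lemma P_U2D: assumes "h \<in> Harm m p q" shows "normsq_u m * du_dx m h \<in> Pspace m (p-1) (q+1)"
proof (cases "q = 0")
  case True then show ?thesis using Dz_q assms by simp
next
  case False then show ?thesis using P_U2[OF HarmD(1)[OF Harm_D[OF assms]]] by simp
qed

lemma P_X2D: assumes "h \<in> Harm m p q" shows "normsq_x m * du_dx m h \<in> Pspace m (p+1) (q-1)"
proof (cases "p = 0")
  case True then show ?thesis using Dz_p assms by simp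
next
  case False then show ?thesis using P_X2[OF HarmD(1)[OF Harm_D[OF assms]]] by simp
qed

lemma SU_P: "h \<in> Harm m p q \<Longrightarrow> SU m q h \<in> Pspace m (p-1) (q+1)"
  unfolding SU_def by (intro P_minus P_cmul P_U2D P_A HarmD(1))
lemma SX_P: "h \<in> Harm m p q \<Longrightarrow> SX m p h \<in> Pspace m (p+1) (q-1)"
  unfolding SX_def by (intro P_minus P_cmul P_X2D P_B HarmD(1))

lemma SU_zero: "h \<in> Harm m 0 q \<Longrightarrow> SU m q h = 0"
  unfolding SU_def using Dz_p[of h m q] A_zero[OF HarmD(1)] by simp
lemma SX_zero: "h \<in> Harm m p 0 \<Longrightarrow> SX m p h = 0"
  unfolding SX_def using Dz_q[of h m p] B_zero[OF HarmD(1)] by simp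

lemma SU_harm: assumes "m > 2" "h \<in> Harm m p q" shows "SU m q h \<in> Harm m (p-1) (q+1)"
proof -
  note hD = HarmD[OF Harm_D[OF assms(2)]]
  have lx: "lap_x m (SU m q h) = 0"
    unfolding SU_def using HarmD[OF assms(2)] hD by (simp add: lin L5a L3a)
  have e: "lap_u m (normsq_u m * du_dx m h) = cst (2 * cx m q) * du_dx m h"
    by (rule lapu_U2_harm[OF hD(1) hD(3)]) (use Dz_q assms(2) in auto)
  have "lap_u m (SU m q h) = 2 * du_dx m h - cst (1 / cx m q) * (cst (2 * cx m q) * du_dx m h)"
    unfolding SU_def using HarmD[OF assms(2)] by (simp add: lin L5b e)
  also have "\<dots> = 0" using cx_nz[OF assms(1), of q] by (simp add: cst_numeral)
  finally show ?thesis using lx SU_P[OF assms(2)] by (simp add: Harm_def)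
qed

lemma SX_harm: assumes "m > 2" "h \<in> Harm m p q" shows "SX m p h \<in> Harm m (p+1) (q-1)"
proof -
  note hD = HarmD[OF Harm_D[OF assms(2)]]
  have lu: "lap_u m (SX m p h) = 0"
    unfolding SX_def using HarmD[OF assms(2)] hD by (simp add: lin L6b L3b)
  have e: "lap_x m (normsq_x m * du_dx m h) = cst (2 * cx m p) * du_dx m h"
    by (rule lapx_X2_harm[OF hD(1) hD(2)]) (use Dz_p assms(2) in auto)
  have "lap_x m (SX m p h) = 2 * du_dx m h - cst (1 / cx m p) * (cst (2 * cx m p) * du_dx m h)"
    unfolding SX_def using HarmD[OF assms(2)] by (simp add: lin L6a e)
  also have "\<dots> = 0" using cx_nz[OF assms(1), of p] by (simp add: cst_numeral)
  finally show ?thesis using lu SX_P[OF assms(2)] by (simp add: Harm_def)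
qed

lemma num_cst[simp]: "numeral n * (cst b * X) = cst (numeral n * b) * X"
  by (simp add: mult.assoc[symmetric] cst_numeral[symmetric] cst_mult)

lemma num_cst2[simp]: "numeral n * cst b = cst (numeral n * b)"
  by (simp add: cst_numeral[symmetric] cst_mult)

lemma X2_cst: "normsq_x m * (cst c * X) = cst c * (normsq_x m * X)" by (simp add: mult.left_commute)
lemma U2_cst: "normsq_u m * (cst c * X) = cst c * (normsq_u m * X)" by (simp add: mult.left_commute)

lemma CC_P: assumes "h \<in> Harm m p q" shows "CC m p q h \<in> Pspace m (p+1) (q+1)"
proof -
  have a: "normsq_x m * SU m q h \<in> Pspace m (p+1) (q+1)"
  proof (cases "p = 0")
    case True then show ?thesis using SU_zero assms by simp
  next
    case False then show ?thesis using P_X2[OF SU_P[OF assms]] by simp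
  qed
  have b: "normsq_u m * SX m p h \<in> Pspace m (p+1) (q+1)"
  proof (cases "q = 0")
    case True then show ?thesis using SX_zero assms by simp
  next
    case False then show ?thesis using P_U2[OF SX_P[OF assms]] by simp
  qed
  have c: "normsq_x m * (normsq_u m * du_dx m h) \<in> Pspace m (p+1) (q+1)"
  proof (cases "p = 0")
    case True then show ?thesis using Dz_p assms by simp
  next
    case False then show ?thesis using P_X2[OF P_U2D[OF assms]] by simp
  qed
  show ?thesis unfolding CC_def
    by (intro P_minus P_cmul a b c P_Q HarmD(1)[OF assms])
qed

lemma CC_harm: assumes "m > 2" "h \<in> Harm m p q" shows "CC m p q h \<in> Harm m (p+1) (q+1)"
proof -
  note h = HarmD[OF assms(2)]
  note hD = HarmD[OF Harm_D[OF assms(2)]]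
  note su = HarmD[OF SU_harm[OF assms]]
  note sx = HarmD[OF SX_harm[OF assms]]
  have c1: "cx m p \<noteq> 0" "cx m q \<noteq> 0" using cx_nz[OF assms(1)] by auto
  have e1: "lap_x m (normsq_x m * SU m q h) = cst (2 * cx m p) * SU m q h"
    by (rule lapx_X2_harm[OF su(1) su(2)]) (use SU_zero assms(2) in auto)
  have e2: "lap_x m (normsq_x m * (normsq_u m * du_dx m h)) = cst (2 * cx m p) * (normsq_u m * du_dx m h)"
    by (rule lapx_X2_harm[OF P_U2D[OF assms(2)]]) (use hD Dz_p assms(2) in \<open>auto simp: L3a\<close>)
  have e3: "lap_u m (normsq_u m * SX m p h) = cst (2 * cx m q) * SX m p h"
    by (rule lapu_U2_harm[OF sx(1) sx(3)]) (use SX_zero assms(2) in auto)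
  have e4: "lap_u m (normsq_u m * du_dx m h) = cst (2 * cx m q) * du_dx m h"
    by (rule lapu_U2_harm[OF hD(1) hD(3)]) (use Dz_q assms(2) in auto)
  have lx: "lap_x m (CC m p q h) = 0"
    unfolding CC_def using h su sx c1
    by (simp add: lin L4a L3a e1 e2) (simp add: SU_def algebra_simps cst_mult cst_numeral)
  have lu: "lap_u m (CC m p q h) = 0"
    unfolding CC_def using h su sx c1
    by (simp add: lin L4b L3b e3 e4) (simp add: SX_def algebra_simps X2_cst cst_mult cst_numeral)
  show ?thesis using lx lu CC_P[OF assms(2)] by (simp add: Harm_def)
qed

lemma Su_eq: assumes "m > 2" "h \<in> Harm m p q" shows "S_u m h = SU m q h"
  unfolding S_u_def
proof (rule pi_s_4[where ?h10.0 = 0 and ?h11.0 = 0 and ?h01.0 = "cst (1 / cx m q) * du_dx m h"])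
  show "u_dx m h \<in> Pspace m (p-1) (q+1)" by (rule P_A[OF HarmD(1)[OF assms(2)]])
  show "SU m q h \<in> Harm m (p-1) (q+1)" by (rule SU_harm[OF assms])
  show "cst (1 / cx m q) * du_dx m h \<in> Harm m (p - 1) (q + 1 - 2)"
    using Harm_cmul[OF Harm_D[OF assms(2)]] by (simp add: numeral_2_eq_2)
  show "q + 1 < 2 \<Longrightarrow> cst (1 / cx m q) * du_dx m h = 0 \<and> (0::cpoly) = 0" using Dz_q assms(2) by auto
  show "u_dx m h = SU m q h + normsq_x m * 0 + normsq_u m * (cst (1 / cx m q) * du_dx m h) + normsq_x m * (normsq_u m * 0)"
    by (simp add: SU_def U2_cst)
qed auto

lemma Sx_eq: assumes "m > 2" "h \<in> Harm m p q" shows "Sxop m h = SX m p h"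
  unfolding Sxop_def
proof (rule pi_s_4[where ?h01.0 = 0 and ?h11.0 = 0 and ?h10.0 = "cst (1 / cx m p) * du_dx m h"])
  show "x_du m h \<in> Pspace m (p+1) (q-1)" by (rule P_B[OF HarmD(1)[OF assms(2)]])
  show "SX m p h \<in> Harm m (p+1) (q-1)" by (rule SX_harm[OF assms])
  show "cst (1 / cx m p) * du_dx m h \<in> Harm m (p + 1 - 2) (q - 1)"
    using Harm_cmul[OF Harm_D[OF assms(2)]] by (simp add: numeral_2_eq_2)
  show "p + 1 < 2 \<Longrightarrow> cst (1 / cx m p) * du_dx m h = 0 \<and> (0::cpoly) = 0" using Dz_p assms(2) by auto
  show "x_du m h = SX m p h + normsq_x m * (cst (1 / cx m p) * du_dx m h) + normsq_u m * 0 + normsq_x m * (normsq_u m * 0)"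
    by (simp add: SX_def X2_cst)
qed auto

lemma C_eq: assumes "m > 2" "h \<in> Harm m p q" shows "C_op m h = CC m p q h"
  unfolding C_op_def
proof (rule pi_s_4[where ?h10.0 = "cst (1 / cx m p) * SU m q h" and ?h01.0 = "cst (1 / cx m q) * SX m p h"
     and ?h11.0 = "cst (1 / (cx m p * cx m q)) * du_dx m h"])
  show "ux m * h \<in> Pspace m (p+1) (q+1)" by (rule P_Q[OF HarmD(1)[OF assms(2)]])
  show "CC m p q h \<in> Harm m (p+1) (q+1)" by (rule CC_harm[OF assms])
  show "cst (1 / cx m p) * SU m q h \<in> Harm m (p + 1 - 2) (q + 1)"
    using Harm_cmul[OF SU_harm[OF assms]] by (simp add: numeral_2_eq_2)
  show "cst (1 / cx m q) * SX m p h \<in> Harm m (p + 1) (q + 1 - 2)"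
    using Harm_cmul[OF SX_harm[OF assms]] by (simp add: numeral_2_eq_2)
  show "cst (1 / (cx m p * cx m q)) * du_dx m h \<in> Harm m (p + 1 - 2) (q + 1 - 2)"
    using Harm_cmul[OF Harm_D[OF assms(2)]] by (simp add: numeral_2_eq_2)
  show "p + 1 < 2 \<Longrightarrow> cst (1 / cx m p) * SU m q h = 0 \<and> cst (1 / (cx m p * cx m q)) * du_dx m h = 0"
    using Dz_p SU_zero assms(2) by auto
  show "q + 1 < 2 \<Longrightarrow> cst (1 / cx m q) * SX m p h = 0 \<and> cst (1 / (cx m p * cx m q)) * du_dx m h = 0"
    using Dz_q SX_zero assms(2) by auto
  show "ux m * h = CC m p q h + normsq_x m * (cst (1 / cx m p) * SU m q h) + normsq_u m * (cst (1 / cx m q) * SX m p h)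
      + normsq_x m * (normsq_u m * (cst (1 / (cx m p * cx m q)) * du_dx m h))"
    by (simp add: CC_def X2_cst U2_cst)
qed


definition eqI :: "nat \<Rightarrow> cpoly \<Rightarrow> cpoly \<Rightarrow> bool" where "eqI m a b \<longleftrightarrow> inI m (a - b)"

lemma eqI_refl: "eqI m a a" by (simp add: eqI_def)
lemma eqI_eq: "a = b \<Longrightarrow> eqI m a b" by (simp add: eqI_def)
lemma eqI_sym: "eqI m a b \<Longrightarrow> eqI m b a"
  unfolding eqI_def using inI_uminus by fastforce
lemma eqI_trans[trans]: "eqI m a b \<Longrightarrow> eqI m b c \<Longrightarrow> eqI m a c"
  unfolding eqI_def using inI_add by fastforce
lemma eqI_add: "eqI m a b \<Longrightarrow> eqI m c d \<Longrightarrow> eqI m (a + c) (b + d)"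
  unfolding eqI_def using inI_add by (fastforce simp: algebra_simps)
lemma eqI_diff: "eqI m a b \<Longrightarrow> eqI m c d \<Longrightarrow> eqI m (a - c) (b - d)"
  unfolding eqI_def using inI_diff by (fastforce simp: algebra_simps)
lemma eqI_mult: "eqI m a b \<Longrightarrow> eqI m (R * a) (R * b)"
  unfolding eqI_def using inI_mult by (fastforce simp: algebra_simps)
lemma eqI_X2: "eqI m (normsq_x m * F) 0" by (simp add: eqI_def)
lemma eqI_U2: "eqI m (normsq_u m * F) 0" by (simp add: eqI_def)
lemma eqI_U2': "eqI m (R * (normsq_u m * F)) 0"
  unfolding eqI_def by (simp add: inI_mult)
lemma eqI_X2': "eqI m (R * (normsq_x m * F)) 0"
  unfolding eqI_def by (simp add: inI_mult)

lemma cst_num_mult[simp]: "cst a * (numeral n * X) = cst (a * numeral n) * X"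
  by (simp add: mult.assoc[symmetric] cst_numeral[symmetric] cst_mult)

lemma eqI_inI: "inI m a \<Longrightarrow> eqI m a 0" by (simp add: eqI_def)

lemma eqI_harm: "eqI m a b \<Longrightarrow> lap_x m a = 0 \<Longrightarrow> lap_u m a = 0 \<Longrightarrow> lap_x m b = 0 \<Longrightarrow> lap_u m b = 0 \<Longrightarrow> a = b"
  unfolding eqI_def by (rule inI_harm_eq)

lemma A_X2: "eqI m (u_dx m (normsq_x m * F)) (2 * (ux m * F))"
  unfolding L10a eqI_def by (simp add: mult.assoc)
lemma A_U2: "eqI m (u_dx m (normsq_u m * F)) 0"
  unfolding L10b by (rule eqI_U2)
lemma A_Q: "eqI m (u_dx m (ux m * F)) (ux m * u_dx m F)"
  unfolding L10c eqI_def by simp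
lemma B_U2: "eqI m (x_du m (normsq_u m * F)) (2 * (ux m * F))"
  unfolding L11a eqI_def by (simp add: mult.assoc)
lemma B_X2: "eqI m (x_du m (normsq_x m * F)) 0"
  unfolding L11b by (rule eqI_X2)
lemma B_Q: "eqI m (x_du m (ux m * F)) (ux m * x_du m F)"
  unfolding L11c eqI_def by simp
lemma D_X2: "eqI m (du_dx m (normsq_x m * F)) (2 * x_du m F)"
  unfolding L8a eqI_def by simp
lemma D_U2: "eqI m (du_dx m (normsq_u m * F)) (2 * u_dx m F)"
  unfolding L8b eqI_def by simp

lemma SU_A: "eqI m (SU m q F) (u_dx m F)"
  unfolding SU_def eqI_def by simp (intro inI_uminus inI_mult inI_U2)
lemma SX_B: "eqI m (SX m p F) (x_du m F)"
  unfolding SX_def eqI_def by simp (intro inI_uminus inI_mult inI_X2)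
lemma CC_Q: "eqI m (CC m p q F) (ux m * F)"
  unfolding CC_def eqI_def
  by (simp add: X2_cst U2_cst inI_mult inI_diff inI_uminus)

lemma eqI_cmul: "eqI m a b \<Longrightarrow> eqI m (cst c * a) (cst c * b)" by (rule eqI_mult)

lemma Harm_lap: "h \<in> Harm m p q \<Longrightarrow> lap_x m h = 0 \<and> lap_u m h = 0" by (simp add: Harm_def)

lemma R1_aux: assumes m: "m > 2" and h: "h \<in> Harm m p q"
  shows "SU m (q+1) (CC m p q h) = cst (1 - 2 / cx m p) * CC m (p-1) (q+1) (SU m q h)"
proof -
  let ?S = "SU m q h" and ?X = "SX m p h" and ?D = "du_dx m h"
  let ?a = "cst (1 / cx m p)" and ?b = "cst (1 / cx m q)" and ?g = "cst (1 / (cx m p * cx m q))"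
  have "eqI m (SU m (q+1) (CC m p q h)) (u_dx m (CC m p q h))" by (rule SU_A)
  also have "u_dx m (CC m p q h) = u_dx m (ux m * h) - ?a * u_dx m (normsq_x m * ?S) - ?b * u_dx m (normsq_u m * ?X)
       - ?g * u_dx m (normsq_x m * (normsq_u m * ?D))"
    unfolding CC_def by (simp add: lin)
  also have "eqI m \<dots> (ux m * u_dx m h - ?a * (2 * (ux m * ?S)) - ?b * 0 - ?g * (2 * (ux m * (normsq_u m * ?D))))"
    by (intro eqI_diff eqI_mult A_Q A_X2 A_U2)
  also have "eqI m \<dots> (ux m * ?S - ?a * (2 * (ux m * ?S)) - ?b * 0 - ?g * 0)"
    by (intro eqI_diff eqI_mult eqI_refl eqI_sym[OF SU_A] eqI_inI inI_mult inI_U2 inI_X2)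
  also have "ux m * ?S - ?a * (2 * (ux m * ?S)) - ?b * 0 - ?g * 0 = cst (1 - 2 / cx m p) * (ux m * ?S)"
    by (simp add: cst_diff[symmetric] cst_mult[symmetric] cst_numeral algebra_simps)
  also have "eqI m \<dots> (cst (1 - 2 / cx m p) * CC m (p-1) (q+1) ?S)"
    by (intro eqI_mult eqI_sym[OF CC_Q])
  finally have e: "eqI m (SU m (q+1) (CC m p q h)) (cst (1 - 2 / cx m p) * CC m (p-1) (q+1) ?S)" .
  have c: "CC m p q h \<in> Harm m (p+1) (q+1)" by (rule CC_harm[OF m h])
  have s: "?S \<in> Harm m (p-1) (q+1)" by (rule SU_harm[OF m h])
  note l1 = HarmD(2,3)[OF SU_harm[OF m c]]
  note l2 = HarmD(2,3)[OF Harm_cmul[OF CC_harm[OF m s]]]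
  show ?thesis by (rule eqI_harm[OF e l1 l2])
qed

lemma R2_aux: assumes m: "m > 2" and h: "h \<in> Harm m p q"
  shows "SX m (p+1) (CC m p q h) = cst (1 - 2 / cx m q) * CC m (p+1) (q-1) (SX m p h)"
proof -
  let ?S = "SU m q h" and ?X = "SX m p h" and ?D = "du_dx m h"
  let ?a = "cst (1 / cx m p)" and ?b = "cst (1 / cx m q)" and ?g = "cst (1 / (cx m p * cx m q))"
  have "eqI m (SX m (p+1) (CC m p q h)) (x_du m (CC m p q h))" by (rule SX_B)
  also have "x_du m (CC m p q h) = x_du m (ux m * h) - ?a * x_du m (normsq_x m * ?S) - ?b * x_du m (normsq_u m * ?X)
       - ?g * x_du m (normsq_x m * (normsq_u m * ?D))"
    unfolding CC_def by (simp add: lin)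
  also have "eqI m \<dots> (ux m * x_du m h - ?a * 0 - ?b * (2 * (ux m * ?X)) - ?g * 0)"
    by (intro eqI_diff eqI_mult B_Q B_X2 B_U2)
  also have "eqI m \<dots> (ux m * ?X - ?a * 0 - ?b * (2 * (ux m * ?X)) - ?g * 0)"
    by (intro eqI_diff eqI_mult eqI_refl eqI_sym[OF SX_B])
  also have "ux m * ?X - ?a * 0 - ?b * (2 * (ux m * ?X)) - ?g * 0 = cst (1 - 2 / cx m q) * (ux m * ?X)"
    by (simp add: cst_diff[symmetric] cst_mult[symmetric] cst_numeral algebra_simps)
  also have "eqI m \<dots> (cst (1 - 2 / cx m q) * CC m (p+1) (q-1) ?X)"
    by (intro eqI_mult eqI_sym[OF CC_Q])
  finally have e: "eqI m (SX m (p+1) (CC m p q h)) (cst (1 - 2 / cx m q) * CC m (p+1) (q-1) ?X)" .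
  have c: "CC m p q h \<in> Harm m (p+1) (q+1)" by (rule CC_harm[OF m h])
  have s: "?X \<in> Harm m (p+1) (q-1)" by (rule SX_harm[OF m h])
  note l1 = HarmD(2,3)[OF SX_harm[OF m c]]
  note l2 = HarmD(2,3)[OF Harm_cmul[OF CC_harm[OF m s]]]
  show ?thesis by (rule eqI_harm[OF e l1 l2])
qed

lemma R3_aux: assumes m: "m > 2" and h: "h \<in> Harm m p q"
  shows "du_dx m (CC m p q h) = cst (1 - 4 / (cx m p * cx m q)) * CC m (p-1) (q-1) (du_dx m h)
     + cst (of_nat p + of_nat q + of_nat m) * h - cst (2 / cx m p) * SX m (p-1) (SU m q h)
     - cst (2 / cx m q) * SU m (q-1) (SX m p h)"
proof -
  let ?S = "SU m q h" and ?X = "SX m p h" and ?D = "du_dx m h"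
  let ?a = "cst (1 / cx m p)" and ?b = "cst (1 / cx m q)" and ?g = "cst (1 / (cx m p * cx m q))"
  let ?CD = "CC m (p-1) (q-1) ?D"
  note hP = HarmD(1)[OF h]
  have s1: "du_dx m (CC m p q h) = (ux m * ?D + of_nat p * h + of_nat q * h + of_nat m * h)
      - ?a * du_dx m (normsq_x m * ?S) - ?b * du_dx m (normsq_u m * ?X)
       - ?g * du_dx m (normsq_x m * (normsq_u m * ?D))"
    unfolding CC_def by (simp add: lin L8c Euler_x[OF hP] Euler_u[OF hP])
  have s2: "eqI m ((ux m * ?D + of_nat p * h + of_nat q * h + of_nat m * h)
      - ?a * du_dx m (normsq_x m * ?S) - ?b * du_dx m (normsq_u m * ?X)
       - ?g * du_dx m (normsq_x m * (normsq_u m * ?D))) ((ux m * ?D + of_nat p * h + of_nat q * h + of_nat m * h)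
      - ?a * (2 * x_du m ?S) - ?b * (2 * u_dx m ?X) - ?g * (2 * x_du m (normsq_u m * ?D)))"
    by (intro eqI_diff eqI_mult eqI_refl D_X2 D_U2)
  have s3: "eqI m ((ux m * ?D + of_nat p * h + of_nat q * h + of_nat m * h)
      - ?a * (2 * x_du m ?S) - ?b * (2 * u_dx m ?X) - ?g * (2 * x_du m (normsq_u m * ?D))) ((?CD + of_nat p * h + of_nat q * h + of_nat m * h)
      - ?a * (2 * SX m (p-1) ?S) - ?b * (2 * SU m (q-1) ?X) - ?g * (2 * (2 * ?CD)))"
  proof -
    have 1: "eqI m (x_du m (normsq_u m * ?D)) (2 * ?CD)"
      using B_U2[of m ?D] eqI_mult[OF eqI_sym[OF CC_Q[of m "p-1" "q-1" ?D]], of 2] by (rule eqI_trans)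
    show ?thesis
      by (intro eqI_diff eqI_add eqI_mult eqI_refl eqI_sym[OF SX_B] eqI_sym[OF SU_A] eqI_sym[OF CC_Q] 1)
  qed
  have s4: "(?CD + of_nat p * h + of_nat q * h + of_nat m * h)
      - ?a * (2 * SX m (p-1) ?S) - ?b * (2 * SU m (q-1) ?X) - ?g * (2 * (2 * ?CD))
     = cst (1 - 4 / (cx m p * cx m q)) * ?CD
     + cst (of_nat p + of_nat q + of_nat m) * h - cst (2 / cx m p) * SX m (p-1) ?S
     - cst (2 / cx m q) * SU m (q-1) ?X"
    by (simp add: cst_diff[symmetric] cst_mult[symmetric] cst_add[symmetric] cst_numeral cst_of_nat algebra_simps)
  have e: "eqI m (du_dx m (CC m p q h)) (cst (1 - 4 / (cx m p * cx m q)) * ?CD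
     + cst (of_nat p + of_nat q + of_nat m) * h - cst (2 / cx m p) * SX m (p-1) ?S
     - cst (2 / cx m q) * SU m (q-1) ?X)"
    unfolding s1 s4[symmetric] by (rule eqI_trans[OF s2 s3])
  have c: "CC m p q h \<in> Harm m (p+1) (q+1)" by (rule CC_harm[OF m h])
  note l1 = HarmD(2,3)[OF Harm_D[OF c]]
  note t1 = HarmD(2,3)[OF CC_harm[OF m Harm_D[OF h]]]
  note t2 = HarmD(2,3)[OF h]
  note t3 = HarmD(2,3)[OF SX_harm[OF m SU_harm[OF m h]]]
  note t4 = HarmD(2,3)[OF SU_harm[OF m SX_harm[OF m h]]]
  have l2: "lap_x m (cst (1 - 4 / (cx m p * cx m q)) * ?CD
     + cst (of_nat p + of_nat q + of_nat m) * h - cst (2 / cx m p) * SX m (p-1) ?S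
     - cst (2 / cx m q) * SU m (q-1) ?X) = 0"
    using t1 t2 t3 t4 by (simp add: lin)
  have l3: "lap_u m (cst (1 - 4 / (cx m p * cx m q)) * ?CD
     + cst (of_nat p + of_nat q + of_nat m) * h - cst (2 / cx m p) * SX m (p-1) ?S
     - cst (2 / cx m q) * SU m (q-1) ?X) = 0"
    using t1 t2 t3 t4 by (simp add: lin)
  show ?thesis by (rule eqI_harm[OF e l1 l2 l3])
qed


definition spn :: "cpoly \<Rightarrow> cpoly \<Rightarrow> bool" where "spn X Y \<longleftrightarrow> (\<exists>c. X = cst c * Y)"

lemma spn_0[simp]: "spn 0 Y" unfolding spn_def by (rule exI[of _ 0]) simp
lemma spn_refl: "spn Y Y" unfolding spn_def by (rule exI[of _ 1]) simp
lemma spn_add: "spn A Y \<Longrightarrow> spn B Y \<Longrightarrow> spn (A + B) Y"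
  unfolding spn_def by (metis cst_add distrib_right)
lemma spn_diff: "spn A Y \<Longrightarrow> spn B Y \<Longrightarrow> spn (A - B) Y"
  unfolding spn_def by (metis cst_diff left_diff_distrib)
lemma spn_cmul: "spn A Y \<Longrightarrow> spn (cst c * A) Y"
  unfolding spn_def by (metis cst_cst)
lemma spn_trans: "spn A B \<Longrightarrow> spn B C \<Longrightarrow> spn A C"
  unfolding spn_def by (metis cst_cst)
lemma spn_cst: "spn (cst c * Y) Y" unfolding spn_def by blast

lemma Q_cst: "ux m * (cst c * X) = cst c * (ux m * X)" by (simp add: mult.left_commute)

lemma SU_cmul: "SU m q (cst c * h) = cst c * SU m q h"
  by (simp add: SU_def lin U2_cst right_diff_distrib)
lemma SX_cmul: "SX m p (cst c * h) = cst c * SX m p h"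
  by (simp add: SX_def lin X2_cst right_diff_distrib)
lemma CC_cmul: "CC m p q (cst c * h) = cst c * CC m p q h"
  by (simp add: CC_def lin X2_cst U2_cst Q_cst SU_cmul SX_cmul right_diff_distrib)

context fixes m :: nat assumes m2: "m > 2"
begin

lemma Su_harm: "h \<in> Harm m p q \<Longrightarrow> S_u m h \<in> Harm m (p-1) (q+1)"
  using Su_eq[OF m2] SU_harm[OF m2] by simp
lemma Sx_harm: "h \<in> Harm m p q \<Longrightarrow> Sxop m h \<in> Harm m (p+1) (q-1)"
  using Sx_eq[OF m2] SX_harm[OF m2] by simp
lemma C_harm: "h \<in> Harm m p q \<Longrightarrow> C_op m h \<in> Harm m (p+1) (q+1)"
  using C_eq[OF m2] CC_harm[OF m2] by simp

lemma Su_cmul: "h \<in> Harm m p q \<Longrightarrow> S_u m (cst c * h) = cst c * S_u m h"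
  using Su_eq[OF m2] Harm_cmul SU_cmul by metis
lemma Sx_cmul: "h \<in> Harm m p q \<Longrightarrow> Sxop m (cst c * h) = cst c * Sxop m h"
  using Sx_eq[OF m2] Harm_cmul SX_cmul by metis
lemma C_cmul: "h \<in> Harm m p q \<Longrightarrow> C_op m (cst c * h) = cst c * C_op m h"
  using C_eq[OF m2] Harm_cmul CC_cmul by metis

lemma Su_0[simp]: "S_u m 0 = 0" using Su_cmul[OF Harm_zero[of m 0 0], of 0] by simp
lemma Sx_0[simp]: "Sxop m 0 = 0" using Sx_cmul[OF Harm_zero[of m 0 0], of 0] by simp
lemma C_0[simp]: "C_op m 0 = 0" using C_cmul[OF Harm_zero[of m 0 0], of 0] by simp

lemma R1: assumes h: "h \<in> Harm m p q" shows "spn (S_u m (C_op m h)) (C_op m (S_u m h))"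
proof -
  have e1: "C_op m h = CC m p q h" by (rule C_eq[OF m2 h])
  have e2: "S_u m (CC m p q h) = SU m (q+1) (CC m p q h)" by (rule Su_eq[OF m2 CC_harm[OF m2 h]])
  have e3: "S_u m h = SU m q h" by (rule Su_eq[OF m2 h])
  have e4: "C_op m (SU m q h) = CC m (p-1) (q+1) (SU m q h)" by (rule C_eq[OF m2 SU_harm[OF m2 h]])
  show ?thesis unfolding e1 e2 e3 e4 R1_aux[OF m2 h] by (rule spn_cst)
qed

lemma R2: assumes h: "h \<in> Harm m p q" shows "spn (Sxop m (C_op m h)) (C_op m (Sxop m h))"
proof -
  have e1: "C_op m h = CC m p q h" by (rule C_eq[OF m2 h])
  have e2: "Sxop m (CC m p q h) = SX m (p+1) (CC m p q h)" by (rule Sx_eq[OF m2 CC_harm[OF m2 h]])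
  have e3: "Sxop m h = SX m p h" by (rule Sx_eq[OF m2 h])
  have e4: "C_op m (SX m p h) = CC m (p+1) (q-1) (SX m p h)" by (rule C_eq[OF m2 SX_harm[OF m2 h]])
  show ?thesis unfolding e1 e2 e3 e4 R2_aux[OF m2 h] by (rule spn_cst)
qed

lemma R3: assumes h: "h \<in> Harm m p q"
  shows "\<exists>k s1 s2 s3. du_dx m (C_op m h) = cst k * C_op m (du_dx m h) + cst s1 * h
     - cst s2 * Sxop m (S_u m h) - cst s3 * S_u m (Sxop m h)"
proof -
  have e1: "C_op m h = CC m p q h" by (rule C_eq[OF m2 h])
  have e2: "C_op m (du_dx m h) = CC m (p-1) (q-1) (du_dx m h)" by (rule C_eq[OF m2 Harm_D[OF h]])
  have e3: "S_u m h = SU m q h" by (rule Su_eq[OF m2 h])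
  have e4: "Sxop m h = SX m p h" by (rule Sx_eq[OF m2 h])
  have e5: "Sxop m (SU m q h) = SX m (p-1) (SU m q h)" by (rule Sx_eq[OF m2 SU_harm[OF m2 h]])
  have e6: "S_u m (SX m p h) = SU m (q-1) (SX m p h)" by (rule Su_eq[OF m2 SX_harm[OF m2 h]])
  show ?thesis unfolding e1 e2 e3 e4 e5 e6 R3_aux[OF m2 h] by blast
qed

lemma Su_D0: "h \<in> Harm m p q \<Longrightarrow> du_dx m h = 0 \<Longrightarrow> S_u m h = u_dx m h"
  using Su_eq[OF m2] by (simp add: SU_def)
lemma Sx_D0: "h \<in> Harm m p q \<Longrightarrow> du_dx m h = 0 \<Longrightarrow> Sxop m h = x_du m h"
  using Sx_eq[OF m2] by (simp add: SX_def)

lemma C_adj: assumes h: "h \<in> Harm m p q" and Y: "lap_x m Y = 0" "lap_u m Y = 0"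
  shows "fischer (C_op m h) Y = fischer h (du_dx m Y)"
proof -
  have "inI m (ux m * h - CC m p q h)" using CC_Q[of m p q h] unfolding eqI_def using inI_uminus by fastforce
  then have "fischer (ux m * h - CC m p q h) Y = 0" using fischer_inI_harm Y by blast
  then have "fischer (CC m p q h) Y = fischer (ux m * h) Y" by (simp add: fischer_diff_left)
  then show ?thesis using C_eq[OF m2 h] by (simp add: FA_Q)
qed

lemma Hspace_Harm: "G \<in> Hspace m a b \<Longrightarrow> G \<in> Harm m a b" by (simp add: Hspace_def Harm_def)
lemma Hspace_D: "G \<in> Hspace m a b \<Longrightarrow> du_dx m G = 0" by (simp add: Hspace_def)
lemma Hspace_B: "G \<in> Hspace m a b \<Longrightarrow> x_du m G = 0" by (simp add: Hspace_def)

lemma F0: "G \<in> Hspace m a b \<Longrightarrow> (S_u m ^^ j) G \<in> Harm m (a - j) (b + j)"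
proof (induction j)
  case 0 then show ?case by (simp add: Hspace_Harm)
next
  case (Suc j) then show ?case using Su_harm[OF Suc.IH[OF Suc.prems]] by (simp add: diff_Suc)
qed

lemma F1: "G \<in> Hspace m a b \<Longrightarrow> du_dx m ((S_u m ^^ j) G) = 0"
proof (induction j)
  case 0 then show ?case by (simp add: Hspace_D)
next
  case (Suc j)
  have h: "(S_u m ^^ j) G \<in> Harm m (a - j) (b + j)" by (rule F0[OF Suc.prems])
  have "(S_u m ^^ Suc j) G = u_dx m ((S_u m ^^ j) G)" using Su_D0[OF h Suc.IH[OF Suc.prems]] by simp
  then show ?case using Suc.IH[OF Suc.prems] HarmD(2)[OF h] by (simp add: L9a)
qed

lemma Su_step: "G \<in> Hspace m a b \<Longrightarrow> (S_u m ^^ Suc j) G = u_dx m ((S_u m ^^ j) G)"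
  using Su_D0[OF F0 F1] by simp

lemma comb3: "cst a * X + cst b * X - cst d * X = cst (a + b - d) * X"
  by (simp add: cst_add[symmetric] cst_diff[symmetric] algebra_simps)

lemma F2: assumes G: "G \<in> Hspace m a b" shows "spn (x_du m ((S_u m ^^ Suc j) G)) ((S_u m ^^ j) G)"
proof (induction j)
  case 0
  have "x_du m ((S_u m ^^ Suc 0) G) = u_dx m (x_du m G) + Eulx m G - Eulu m G"
    using Su_step[OF G, of 0] by (simp add: L12)
  also have "\<dots> = cst (of_nat a) * G - cst (of_nat b) * G"
    using Hspace_B[OF G] Euler_x[OF HarmD(1)[OF Hspace_Harm[OF G]]] Euler_u[OF HarmD(1)[OF Hspace_Harm[OF G]]]
    by (simp add: cst_of_nat)
  finally show ?case by (simp add: spn_diff spn_cst)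
next
  case (Suc j)
  let ?X = "(S_u m ^^ j) G" and ?Y = "(S_u m ^^ Suc j) G"
  have hY: "?Y \<in> Harm m (a - Suc j) (b + Suc j)" by (rule F0[OF G])
  obtain c where c: "x_du m ?Y = cst c * ?X" using Suc unfolding spn_def by blast
  have u: "u_dx m (x_du m ?Y) = cst c * ?Y" unfolding c by (simp add: lin Su_D0[OF F0[OF G] F1[OF G]])
  have "x_du m ((S_u m ^^ Suc (Suc j)) G) = u_dx m (x_du m ?Y) + Eulx m ?Y - Eulu m ?Y"
    unfolding Su_step[OF G, of "Suc j"] by (rule L12)
  also have "\<dots> = cst c * ?Y + cst (of_nat (a - Suc j)) * ?Y - cst (of_nat (b + Suc j)) * ?Y"
    by (simp only: u Euler_x[OF HarmD(1)[OF hY]] Euler_u[OF HarmD(1)[OF hY]] cst_of_nat)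
  finally show ?case by (simp only: comb3 spn_cst)
qed

definition gg :: "cpoly \<Rightarrow> nat \<Rightarrow> nat \<Rightarrow> cpoly" where "gg G i j = (C_op m ^^ i) ((S_u m ^^ j) G)"

lemma gg_harm: "G \<in> Hspace m a b \<Longrightarrow> gg G i j \<in> Harm m (a - j + i) (b + j + i)"
proof (induction i)
  case 0 then show ?case using F0 by (simp add: gg_def)
next
  case (Suc i) then show ?case using C_harm[OF Suc.IH[OF Suc.prems]] by (simp add: gg_def)
qed

lemma gg_Suc: "gg G (Suc i) j = C_op m (gg G i j)" by (simp add: gg_def)
lemma gg_0: "gg G 0 j = (S_u m ^^ j) G" by (simp add: gg_def)

lemma P5: assumes G: "G \<in> Hspace m a b" shows "spn (S_u m (gg G i j)) (gg G i (Suc j))"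
proof (induction i)
  case 0 then show ?case by (simp add: gg_def spn_refl)
next
  case (Suc i)
  obtain c where c: "S_u m (gg G i j) = cst c * gg G i (Suc j)" using Suc unfolding spn_def by blast
  have "spn (S_u m (C_op m (gg G i j))) (C_op m (S_u m (gg G i j)))" by (rule R1[OF gg_harm[OF G]])
  moreover have "C_op m (S_u m (gg G i j)) = cst c * gg G (Suc i) (Suc j)"
    unfolding c gg_Suc by (rule C_cmul[OF gg_harm[OF G]])
  ultimately show ?case unfolding gg_Suc by (metis spn_trans spn_cst)
qed

lemma P4a: assumes G: "G \<in> Hspace m a b" shows "Sxop m (gg G i 0) = 0"
proof (induction i)
  case 0 then show ?case using Sx_D0[OF Hspace_Harm[OF G] Hspace_D[OF G]] Hspace_B[OF G] by (simp add: gg_def)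
next
  case (Suc i)
  have "spn (Sxop m (C_op m (gg G i 0))) (C_op m (Sxop m (gg G i 0)))" by (rule R2[OF gg_harm[OF G]])
  then show ?case unfolding gg_Suc Suc by (simp add: spn_def)
qed

lemma P4: assumes G: "G \<in> Hspace m a b" shows "spn (Sxop m (gg G i (Suc j))) (gg G i j)"
proof (induction i)
  case 0
  have "Sxop m (gg G 0 (Suc j)) = x_du m ((S_u m ^^ Suc j) G)"
    unfolding gg_0 by (rule Sx_D0[OF F0[OF G] F1[OF G]])
  then show ?case using F2[OF G, of j] by (simp add: gg_0)
next
  case (Suc i)
  obtain c where c: "Sxop m (gg G i (Suc j)) = cst c * gg G i j" using Suc unfolding spn_def by blast
  have "spn (Sxop m (C_op m (gg G i (Suc j)))) (C_op m (Sxop m (gg G i (Suc j))))" by (rule R2[OF gg_harm[OF G]])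
  moreover have "C_op m (Sxop m (gg G i (Suc j))) = cst c * gg G (Suc i) j"
    unfolding c gg_Suc by (rule C_cmul[OF gg_harm[OF G]])
  ultimately show ?case unfolding gg_Suc by (metis spn_trans spn_cst)
qed

lemma P3a: "G \<in> Hspace m a b \<Longrightarrow> du_dx m (gg G 0 j) = 0" by (simp add: gg_0 F1)

lemma P3_step: assumes G: "G \<in> Hspace m a b" and T1: "spn (C_op m (du_dx m (gg G i j))) (gg G i j)"
  shows "spn (du_dx m (gg G (Suc i) j)) (gg G i j)"
proof -
  let ?h = "gg G i j"
  have h: "?h \<in> Harm m (a - j + i) (b + j + i)" by (rule gg_harm[OF G])
  obtain k s1 s2 s3 where e: "du_dx m (C_op m ?h) = cst k * C_op m (du_dx m ?h) + cst s1 * ?h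
     - cst s2 * Sxop m (S_u m ?h) - cst s3 * S_u m (Sxop m ?h)" using R3[OF h] by blast
  have T2: "spn (Sxop m (S_u m ?h)) ?h"
  proof -
    obtain l where l: "S_u m ?h = cst l * gg G i (Suc j)" using P5[OF G, of i j] unfolding spn_def by blast
    show ?thesis unfolding l Sx_cmul[OF gg_harm[OF G]] by (rule spn_cmul[OF P4[OF G]])
  qed
  have T3: "spn (S_u m (Sxop m ?h)) ?h"
  proof (cases j)
    case 0 then show ?thesis using P4a[OF G] by simp
  next
    case (Suc j')
    obtain l where l: "Sxop m (gg G i (Suc j')) = cst l * gg G i j'" using P4[OF G, of i j'] unfolding spn_def by blast
    show ?thesis unfolding Suc l Su_cmul[OF gg_harm[OF G]] by (rule spn_cmul[OF P5[OF G]])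
  qed
  show ?thesis unfolding gg_Suc e
    by (intro spn_diff spn_add spn_cmul T1 T2 T3 spn_refl)
qed

lemma P3: assumes G: "G \<in> Hspace m a b" shows "spn (du_dx m (gg G (Suc i) j)) (gg G i j)"
proof (induction i)
  case 0 show ?case by (rule P3_step[OF G]) (use P3a[OF G] in simp)
next
  case (Suc i')
  then obtain d where d: "du_dx m (gg G (Suc i') j) = cst d * gg G i' j" unfolding spn_def by blast
  have "spn (C_op m (du_dx m (gg G (Suc i') j))) (gg G (Suc i') j)"
    unfolding d C_cmul[OF gg_harm[OF G]] gg_Suc[symmetric] by (rule spn_cst)
  then show ?case by (rule P3_step[OF G])
qed

lemma orthS: assumes H: "H \<in> Hspace m a1 b1" and G: "G \<in> Hspace m a2 b2"
  shows "j2 < j1 \<Longrightarrow> fischer ((S_u m ^^ j1) H) ((S_u m ^^ j2) G) = 0"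
proof (induction j2 arbitrary: j1)
  case 0
  then obtain j1' where j1: "j1 = Suc j1'" by (cases j1) auto
  have "fischer ((S_u m ^^ j1) H) G = fischer ((S_u m ^^ j1') H) (x_du m G)"
    unfolding j1 funpow.simps comp_def Su_D0[OF F0[OF H] F1[OF H]] by (rule FA_A)
  then show ?case using Hspace_B[OF G] by simp
next
  case (Suc j2)
  then obtain j1' where j1: "j1 = Suc j1'" and lt: "j2 < j1'" by (cases j1) auto
  obtain c where c: "x_du m ((S_u m ^^ Suc j2) G) = cst c * (S_u m ^^ j2) G"
    using F2[OF G, of j2] unfolding spn_def by blast
  have "fischer ((S_u m ^^ j1) H) ((S_u m ^^ Suc j2) G) = fischer ((S_u m ^^ j1') H) (x_du m ((S_u m ^^ Suc j2) G))"
    unfolding j1 funpow.simps(2) comp_def Su_D0[OF F0[OF H] F1[OF H]] by (rule FA_A)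
  also have "\<dots> = c * fischer ((S_u m ^^ j1') H) ((S_u m ^^ j2) G)" unfolding c by (rule fischer_cmul_right)
  also have "\<dots> = 0" using Suc.IH[OF lt] by simp
  finally show ?case .
qed

lemma orth: assumes H: "H \<in> Hspace m a1 b1" and G: "G \<in> Hspace m a2 b2"
  shows "(i1, j1) \<noteq> (i2, j2) \<Longrightarrow> fischer (gg H i1 j1) (gg G i2 j2) = 0"
proof (induction i1 arbitrary: i2)
  case 0
  show ?case
  proof (cases i2)
    case 0
    then have "j1 \<noteq> j2" using "0.prems" by simp
    then consider "j2 < j1" | "j1 < j2" by linarith
    then show ?thesis
    proof cases
      case 1 then show ?thesis using orthS[OF H G] 0 by (simp add: gg_0)
    next
      case 2 then show ?thesis using orthS[OF G H] 0 fischer_conj by (metis complex_cnj_zero gg_0)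
    qed
  next
    case (Suc i2')
    have hG: "gg G i2' j2 \<in> Harm m (a2 - j2 + i2') (b2 + j2 + i2')" by (rule gg_harm[OF G])
    note hH = HarmD(2,3)[OF gg_harm[OF H, of 0 j1]]
    have "fischer (gg G (Suc i2') j2) (gg H 0 j1) = fischer (gg G i2' j2) (du_dx m (gg H 0 j1))"
      unfolding gg_Suc by (rule C_adj[OF hG hH])
    also have "\<dots> = 0" using P3a[OF H] by simp
    finally show ?thesis using Suc fischer_conj by (metis complex_cnj_zero)
  qed
next
  case (Suc i1')
  have hH: "gg H i1' j1 \<in> Harm m (a1 - j1 + i1') (b1 + j1 + i1')" by (rule gg_harm[OF H])
  show ?case
  proof (cases i2)
    case 0
    note hG = HarmD(2,3)[OF gg_harm[OF G, of 0 j2]]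
    have "fischer (gg H (Suc i1') j1) (gg G 0 j2) = fischer (gg H i1' j1) (du_dx m (gg G 0 j2))"
      unfolding gg_Suc by (rule C_adj[OF hH hG])
    then show ?thesis using P3a[OF G] 0 by simp
  next
    case (Suc i2')
    note hG = HarmD(2,3)[OF gg_harm[OF G, of "Suc i2'" j2]]
    obtain d where d: "du_dx m (gg G (Suc i2') j2) = cst d * gg G i2' j2" using P3[OF G] unfolding spn_def by blast
    have ne: "(i1', j1) \<noteq> (i2', j2)" using Suc.prems \<open>i2 = Suc i2'\<close> by simp
    have "fischer (gg H (Suc i1') j1) (gg G (Suc i2') j2) = fischer (gg H i1' j1) (du_dx m (gg G (Suc i2') j2))"
      unfolding gg_Suc[of H] by (rule C_adj[OF hH hG])
    also have "\<dots> = d * fischer (gg H i1' j1) (gg G i2' j2)" unfolding d by (rule fischer_cmul_right)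
    also have "\<dots> = 0" using Suc.IH[OF ne] by simp
    finally show ?thesis using Suc by simp
  qed
qed

end

theorem main_orth:
  fixes m k l \<alpha>1 \<alpha>2 \<beta>1 \<beta>2 :: nat and H G :: cpoly
  assumes "m > 4"
    and "(\<alpha>1, \<beta>1) \<noteq> (\<alpha>2, \<beta>2)"
    and "H \<in> Hspace m a1 b1"
    and "G \<in> Hspace m a2 b2"
  shows "fischer ((C_op m ^^ \<alpha>1) ((S_u m ^^ \<beta>1) H))
                 ((C_op m ^^ \<alpha>2) ((S_u m ^^ \<beta>2) G)) = 0"
proof -
  have m2: "m > 2" using assms(1) by simp
  show ?thesis using orth[OF m2 assms(3) assms(4) assms(2)] by (simp add: gg_def[OF m2])
qed



theorem theorem6p2:
  fixes m k l \<alpha>1 \<alpha>2 \<beta>1 \<beta>2 :: nat and H G :: cpoly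
  assumes "m > 4"
    and "k \<ge> l"
    and "\<alpha>1 \<le> l" and "\<alpha>2 \<le> l"
    and "\<beta>1 \<le> l - \<alpha>1" and "\<beta>2 \<le> l - \<alpha>2"
    and "(\<alpha>1, \<beta>1) \<noteq> (\<alpha>2, \<beta>2)"
    and "H \<in> Hspace m (k - \<alpha>1 + \<beta>1) (l - \<alpha>1 - \<beta>1)"
    and "G \<in> Hspace m (k - \<alpha>2 + \<beta>2) (l - \<alpha>2 - \<beta>2)"
  shows "fischer ((C_op m ^^ \<alpha>1) ((S_u m ^^ \<beta>1) H))
                 ((C_op m ^^ \<alpha>2) ((S_u m ^^ \<beta>2) G)) = 0"
  by (rule main_orth[OF assms(1) assms(7) assms(8) assms(9)])

end
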